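(* Let $-3<\gamma\le1$, $l\ge1$, $m,\beta\in\mathbb{R}$, $A>0$, $\vartheta>0$. Then, for sufficiently small $\hbar,\delta>0$, there is a constant $C>0$, independent of $l,\delta,\hbar,A$, such that for all functions $f$ on $[0,A]\times\mathbb{R}^3$: (1) $\|Y_A(f)\|_{L^\infty_{x,v}}\le C\|f(A,\cdot)\|_{L^\infty_v}$; (2) $\|Z(f)\|_{L^\infty_{x,v}}\le C\|\nu^{-1}f\|_{L^\infty_{x,v}}$; (3) $\|U(f)\|_{L^\infty_{x,v}}\le C\|\nu^{-1}f\|_{L^\infty_{x,v}}$, where $L^\infty_{x,v}$ norms are taken over $(x,v)\in(0,A)\times\mathbb{R}^3$.
   Context: Fix $\rho,T>0$, $\bar u=(\bar u_1,\bar u_2,0)$, $\mathcal M(v)=\frac{\rho}{(2\pi T)^{3/2}}e^{-|v-\bar u|^2/(2T)}$, $\nu(v)=\int_{\mathbb{R}^3}|v_*-v|^\gamma\mathcal M(v_* )dv_*$. Fix $T_w$ with $0<T_w<2T$, $u_w\in\mathbb{R}^3$ with $u_{w,3}=0$, $M_w(v)=\sqrt{2\pi/T_w}\,(2\pi T_w)^{-3/2}e^{-|v-u_w|^2/(2T_w)}$, $\alpha_*\in[0,1]$, $R_0v=(v_1,v_2,-v_3)$. $\Upsilon:[0,\infty)\to[0,1]$ smooth monotone with $\Upsilon=1$ on $[0,1]$, $\Upsilon=0$ on $[2,\infty)$; $\sigma(x,v)=5(\delta x+l)^{\frac2{3-\gamma}}[1-\Upsilon(\frac{\delta x+l}{(1+|v-\bar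 u|)^{3-\gamma}})]+(\frac{\delta x+l}{(1+|v-\bar u|)^{1-\gamma}}+3|v-\bar u|^2)\Upsilon(\frac{\delta x+l}{(1+|v-\bar u|)^{3-\gamma}})$, $\sigma_x=\partial_x\sigma$, $\sigma_{xx}=\partial_x^2\sigma$. Define $\kappa(x,v)=\int_0^x\big[-\frac{m\sigma_{xx}(y,v)}{2\sigma_x(y,v)}-\hbar\sigma_x(y,v)+\frac{\nu(v)}{v_3}\big]dy$ and $\mathcal M_\sigma(v)=\mathcal M(v)e^{-2\hbar\sigma(0,v)}$. For $0<x<A$: $Y_A(f)(x,v)=(1-\alpha_* )e^{\kappa(A,R_0v)-\kappa(x,v)}f(A,R_0v)+\alpha_*\frac{M_w(v)}{\sqrt{\mathcal M_\sigma(v)}}\int_{v_3'<0}(-v_3')\frac{\sigma_x^{m/2}(0,v)}{\sigma_x^{m/2}(0,v')}e^{\kappa(A,v')-\kappa(x,v)}f(A,v')\sqrt{\mathcal M_\sigma(v')}dv'$ if $v_3>0$, and $Y_A(f)=e^{\kappa(A,v)-\kappa(x,v)}f(A,v)$ if $v_3<0$; $Z(f)(x,v)=(1-\alpha_* )\int_0^Ae^{-[\kappa(x,v)-\kappa(x',R_0v)]}\frac1{v_3}f(x',R_0v)dx'-\alpha_*\frac{M_w(v)}{\sqrt{\mathcal M_\sigma(v)}}\int_{v_3'<0}\int_0^A(-v_3')\frac{\sigma_x^{m/2}(0,v)}{\sigma_x^{m/2}(0,v')}e^{-[\kappa(x,v)-\kappa(x',v')]}\frac1{v_3'}f(x',v')\sqrt{\mathcal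 M_\sigma(v')}dx'dv'$ if $v_3>0$, and $Z(f)=0$ if $v_3<0$; $U(f)(x,v)=\int_0^xe^{-[\kappa(x,v)-\kappa(x',v)]}\frac1{v_3}f(x',v)dx'$ if $v_3>0$, and $U(f)=-\int_x^Ae^{-[\kappa(x,v)-\kappa(x',v)]}\frac1{v_3}f(x',v)dx'$ if $v_3<0$. *)

theory Defs
  imports "HOL-Analysis.Analysis"
begin

definition Maxw :: "real \<Rightarrow> real \<Rightarrow> real^3 \<Rightarrow> real^3 \<Rightarrow> real" where
  "Maxw rho T ub v = rho / (2 * pi * T) powr (3/2) * exp (- (norm (v - ub))\<^sup>2 / (2 * T))"

definition nuf :: "real \<Rightarrow> real \<Rightarrow> real \<Rightarrow> real^3 \<Rightarrow> real^3 \<Rightarrow> real" where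
  "nuf gam rho T ub v = (\<integral>w. norm (w - v) powr gam * Maxw rho T ub w \<partial>lborel)"

definition Mwall :: "real \<Rightarrow> real^3 \<Rightarrow> real^3 \<Rightarrow> real" where
  "Mwall Tw uw v = sqrt (2 * pi / Tw) * (2 * pi * Tw) powr (-3/2) * exp (- (norm (v - uw))\<^sup>2 / (2 * Tw))"

definition R0 :: "real^3 \<Rightarrow> real^3" where
  "R0 v = (\<chi> i. if i = 3 then - (v $ i) else v $ i)"

(* Upsilon : [0,oo) -> [0,1] smooth, monotone, =1 on [0,1], =0 on [2,oo).
   Smoothness is expressed on all of R (any such function extends smoothly by 1 to (-oo,0)). *)
definition cutoff :: "(real \<Rightarrow> real) \<Rightarrow> bool" where
  "cutoff Ups \<longleftrightarrow>
     (\<forall>k x. ((deriv ^^ k) Ups) differentiable (at x)) \<and>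
     (\<forall>s\<ge>0. 0 \<le> Ups s \<and> Ups s \<le> 1) \<and>
     antimono_on {0..} Ups \<and>
     (\<forall>s\<in>{0..1}. Ups s = 1) \<and>
     (\<forall>s\<ge>2. Ups s = 0)"

definition sigmaf :: "real \<Rightarrow> (real \<Rightarrow> real) \<Rightarrow> real \<Rightarrow> real \<Rightarrow> real^3 \<Rightarrow> real \<Rightarrow> real^3 \<Rightarrow> real" where
  "sigmaf gam Ups delta l ub x v =
     5 * (delta * x + l) powr (2 / (3 - gam))
       * (1 - Ups ((delta * x + l) / (1 + norm (v - ub)) powr (3 - gam)))
     + ((delta * x + l) / (1 + norm (v - ub)) powr (1 - gam) + 3 * (norm (v - ub))\<^sup>2)
       * Ups ((delta * x + l) / (1 + norm (v - ub)) powr (3 - gam))"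

definition sigmax :: "real \<Rightarrow> (real \<Rightarrow> real) \<Rightarrow> real \<Rightarrow> real \<Rightarrow> real^3 \<Rightarrow> real \<Rightarrow> real^3 \<Rightarrow> real" where
  "sigmax gam Ups delta l ub x v = deriv (\<lambda>y. sigmaf gam Ups delta l ub y v) x"

definition sigmaxx :: "real \<Rightarrow> (real \<Rightarrow> real) \<Rightarrow> real \<Rightarrow> real \<Rightarrow> real^3 \<Rightarrow> real \<Rightarrow> real^3 \<Rightarrow> real" where
  "sigmaxx gam Ups delta l ub x v = deriv (\<lambda>y. sigmax gam Ups delta l ub y v) x"

definition kappa :: "real \<Rightarrow> real \<Rightarrow> real \<Rightarrow> (real \<Rightarrow> real) \<Rightarrow> real \<Rightarrow> real
     \<Rightarrow> real \<Rightarrow> real \<Rightarrow> real^3 \<Rightarrow> real \<Rightarrow> real^3 \<Rightarrow> real" where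
  "kappa m hb gam Ups delta l rho T ub x v =
     (\<integral>y\<in>{0..x}. (- m * sigmaxx gam Ups delta l ub y v / (2 * sigmax gam Ups delta l ub y v)
                   - hb * sigmax gam Ups delta l ub y v
                   + nuf gam rho T ub v / v $ 3) \<partial>lborel)"

definition Msig :: "real \<Rightarrow> real \<Rightarrow> (real \<Rightarrow> real) \<Rightarrow> real \<Rightarrow> real \<Rightarrow> real \<Rightarrow> real \<Rightarrow> real^3 \<Rightarrow> real^3 \<Rightarrow> real" where
  "Msig hb gam Ups delta l rho T ub v = Maxw rho T ub v * exp (- 2 * hb * sigmaf gam Ups delta l ub 0 v)"

(* Y_A(f)(x,v); the value at v_3 = 0 (a null set) is set to 0 *)
definition YA :: "real \<Rightarrow> real \<Rightarrow> real \<Rightarrow> (real \<Rightarrow> real) \<Rightarrow> real \<Rightarrow> real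
     \<Rightarrow> real \<Rightarrow> real \<Rightarrow> real^3 \<Rightarrow> real \<Rightarrow> real^3 \<Rightarrow> real \<Rightarrow> real
     \<Rightarrow> (real \<Rightarrow> real^3 \<Rightarrow> real) \<Rightarrow> real \<Rightarrow> real^3 \<Rightarrow> real" where
  "YA m hb gam Ups delta l rho T ub Tw uw alpha A f x v =
    (let kap = kappa m hb gam Ups delta l rho T ub;
         sx = sigmax gam Ups delta l ub;
         Ms = Msig hb gam Ups delta l rho T ub
     in if v $ 3 > 0 then
          (1 - alpha) * exp (kap A (R0 v) - kap x v) * f A (R0 v)
          + alpha * Mwall Tw uw v / sqrt (Ms v) *
            (\<integral>w\<in>{w. w $ 3 < 0}. (- w $ 3) * (sx 0 v powr (m/2) / sx 0 w powr (m/2))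
                 * exp (kap A w - kap x v) * f A w * sqrt (Ms w) \<partial>lborel)
        else if v $ 3 < 0 then exp (kap A v - kap x v) * f A v
        else 0)"

definition Zop :: "real \<Rightarrow> real \<Rightarrow> real \<Rightarrow> (real \<Rightarrow> real) \<Rightarrow> real \<Rightarrow> real
     \<Rightarrow> real \<Rightarrow> real \<Rightarrow> real^3 \<Rightarrow> real \<Rightarrow> real^3 \<Rightarrow> real \<Rightarrow> real
     \<Rightarrow> (real \<Rightarrow> real^3 \<Rightarrow> real) \<Rightarrow> real \<Rightarrow> real^3 \<Rightarrow> real" where
  "Zop m hb gam Ups delta l rho T ub Tw uw alpha A f x v =
    (let kap = kappa m hb gam Ups delta l rho T ub;
         sx = sigmax gam Ups delta l ub;
         Ms = Msig hb gam Ups delta l rho T ub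
     in if v $ 3 > 0 then
          (1 - alpha) * (\<integral>x'\<in>{0..A}. exp (- (kap x v - kap x' (R0 v))) * (1 / v $ 3) * f x' (R0 v) \<partial>lborel)
          - alpha * Mwall Tw uw v / sqrt (Ms v) *
            (\<integral>w\<in>{w. w $ 3 < 0}. (\<integral>x'\<in>{0..A}. (- w $ 3) * (sx 0 v powr (m/2) / sx 0 w powr (m/2))
                 * exp (- (kap x v - kap x' w)) * (1 / w $ 3) * f x' w * sqrt (Ms w) \<partial>lborel) \<partial>lborel)
        else 0)"

(* U(f)(x,v); the value at v_3 = 0 is set to 0 *)
definition Uop :: "real \<Rightarrow> real \<Rightarrow> real \<Rightarrow> (real \<Rightarrow> real) \<Rightarrow> real \<Rightarrow> real
     \<Rightarrow> real \<Rightarrow> real \<Rightarrow> real^3 \<Rightarrow> real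
     \<Rightarrow> (real \<Rightarrow> real^3 \<Rightarrow> real) \<Rightarrow> real \<Rightarrow> real^3 \<Rightarrow> real" where
  "Uop m hb gam Ups delta l rho T ub A f x v =
    (let kap = kappa m hb gam Ups delta l rho T ub
     in if v $ 3 > 0 then
          (\<integral>x'\<in>{0..x}. exp (- (kap x v - kap x' v)) * (1 / v $ 3) * f x' v \<partial>lborel)
        else if v $ 3 < 0 then
          - (\<integral>x'\<in>{x..A}. exp (- (kap x v - kap x' v)) * (1 / v $ 3) * f x' v \<partial>lborel)
        else 0)"

end

theory Submission
  imports Defs
begin


lemma cutoff_D:
  assumes "cutoff Ups"
  shows "\<And>k x. ((deriv ^^ k) Ups) differentiable (at x)"
    and "\<And>s. s \<ge> 0 \<Longrightarrow> 0 \<le> Ups s \<and> Ups s \<le> 1"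
    and "antimono_on {0..} Ups"
    and "\<And>s. 0 \<le> s \<Longrightarrow> s \<le> 1 \<Longrightarrow> Ups s = 1"
    and "\<And>s. s \<ge> 2 \<Longrightarrow> Ups s = 0"
  using assms unfolding cutoff_def by auto

lemma ups_deriv0:
  assumes "cutoff Ups"
  shows "(Ups has_real_derivative deriv Ups x) (at x)"
proof -
  have "((deriv ^^ 0) Ups) differentiable (at x)" using cutoff_D(1)[OF assms] .
  then show ?thesis by (simp add: DERIV_deriv_iff_real_differentiable)
qed

lemma ups_deriv1:
  assumes "cutoff Ups"
  shows "(deriv Ups has_real_derivative deriv (deriv Ups) x) (at x)"
proof -
  have "((deriv ^^ 1) Ups) differentiable (at x)" using cutoff_D(1)[OF assms] .
  then show ?thesis by (simp add: DERIV_deriv_iff_real_differentiable)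
qed

lemma ups_cont0: "cutoff Ups \<Longrightarrow> isCont Ups x"
  using ups_deriv0 DERIV_isCont by blast
lemma ups_cont1: "cutoff Ups \<Longrightarrow> isCont (deriv Ups) x"
  using ups_deriv1 DERIV_isCont by blast
lemma ups_cont2:
  assumes "cutoff Ups" shows "isCont (deriv (deriv Ups)) x"
proof -
  have "((deriv ^^ 2) Ups) differentiable (at x)" using cutoff_D(1)[OF assms] .
  then have "isCont ((deriv ^^ 2) Ups) x" using differentiable_imp_continuous_within by blast
  then show ?thesis by (simp add: numeral_2_eq_2)
qed

lemma ups_d1_nonpos:
  assumes "cutoff Ups" "s > 0"
  shows "deriv Ups s \<le> 0"
proof -
  have "mono_on {0..} (\<lambda>x. - Ups x)"
    using cutoff_D(3)[OF assms(1)] unfolding monotone_on_def by auto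
  moreover have "((\<lambda>x. - Ups x) has_real_derivative - deriv Ups s) (at s)"
    using ups_deriv0[OF assms(1)] by (intro derivative_eq_intros) auto
  moreover have "s \<in> interior {0..}" using assms(2) by simp
  ultimately have "- deriv Ups s \<ge> 0" by (rule mono_on_imp_deriv_nonneg)
  then show ?thesis by simp
qed

lemma ups_d1_low:
  assumes "cutoff Ups" "0 < s" "s \<le> 1"
  shows "deriv Ups s = 0"
proof -
  have open_case: "deriv Ups t = 0" if "0 < t" "t < 1" for t
  proof (rule DERIV_local_const[OF ups_deriv0[OF assms(1)]])
    show "0 < min t (1 - t)" using that by simp
    show "\<forall>y. \<bar>t - y\<bar> < min t (1 - t) \<longrightarrow> Ups t = Ups y"
      using that cutoff_D(4)[OF assms(1)] by auto
  qed
  show ?thesis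
  proof (cases "s < 1")
    case True then show ?thesis using open_case assms by auto
  next
    case False
    then have s1: "s = 1" using assms by simp
    have "(deriv Ups \<longlongrightarrow> deriv Ups 1) (at_left 1)"
      using ups_cont1[OF assms(1)] by (simp add: isCont_def filterlim_at_split)
    moreover have "eventually (\<lambda>t. deriv Ups t = 0) (at_left (1::real))"
      unfolding eventually_at_left_field
      by (rule exI[of _ "1/2"]) (auto intro: open_case)
    then have "(deriv Ups \<longlongrightarrow> 0) (at_left 1)"
      by (rule tendsto_eventually)
    ultimately show ?thesis using s1 tendsto_unique[OF trivial_limit_at_left_real] by blast
  qed
qed

lemma ups_d1_high:
  assumes "cutoff Ups" "s \<ge> 2"
  shows "deriv Ups s = 0"
proof -
  have open_case: "deriv Ups t = 0" if "2 < t" for t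
  proof (rule DERIV_local_const[OF ups_deriv0[OF assms(1)]])
    show "0 < t - 2" using that by simp
    show "\<forall>y. \<bar>t - y\<bar> < t - 2 \<longrightarrow> Ups t = Ups y"
      using that cutoff_D(5)[OF assms(1)] by auto
  qed
  show ?thesis
  proof (cases "s > 2")
    case True then show ?thesis using open_case by auto
  next
    case False
    then have s1: "s = 2" using assms by simp
    have "(deriv Ups \<longlongrightarrow> deriv Ups 2) (at_right 2)"
      using ups_cont1[OF assms(1)] by (simp add: isCont_def filterlim_at_split)
    moreover have "eventually (\<lambda>t. deriv Ups t = 0) (at_right (2::real))"
      unfolding eventually_at_right_field
      by (rule exI[of _ "3"]) (auto intro: open_case)
    then have "(deriv Ups \<longlongrightarrow> 0) (at_right 2)"
      by (rule tendsto_eventually)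
    ultimately show ?thesis using s1 tendsto_unique[OF trivial_limit_at_right_real] by blast
  qed
qed

lemma ups_d1_bound:
  assumes "cutoff Ups"
  obtains B where "B \<ge> 0" "\<And>s. s > 0 \<Longrightarrow> \<bar>deriv Ups s\<bar> \<le> B"
proof -
  have "continuous_on {1..2} (deriv Ups)"
    using ups_cont1[OF assms] by (simp add: continuous_at_imp_continuous_on)
  then have "compact (deriv Ups ` {1..2})" by (rule compact_continuous_image) simp
  then obtain B where B: "\<And>y. y \<in> deriv Ups ` {1..2} \<Longrightarrow> norm y \<le> B"
    using compact_imp_bounded bounded_iff by metis
  have "\<bar>deriv Ups s\<bar> \<le> max B 0" if "s > 0" for s
  proof (cases "s \<in> {1..2}")
    case True then show ?thesis using B[of "deriv Ups s"] by auto
  next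
    case False
    then have "s < 1 \<or> s > 2" by auto
    then have "deriv Ups s = 0" using ups_d1_low[OF assms that] ups_d1_high[OF assms] by auto
    then show ?thesis by simp
  qed
  then show ?thesis using that[of "max B 0"] by auto
qed


definition Sg :: "(real \<Rightarrow> real) \<Rightarrow> real \<Rightarrow> real \<Rightarrow> real \<Rightarrow> real \<Rightarrow> real \<Rightarrow> real" where
  "Sg U p a b c z = 5 * z powr p * (1 - U (z / a)) + (z / b + c) * U (z / a)"

definition Gg :: "(real \<Rightarrow> real) \<Rightarrow> real \<Rightarrow> real \<Rightarrow> real \<Rightarrow> real \<Rightarrow> real \<Rightarrow> real" where
  "Gg U p a b c z = 5 * p * z powr (p - 1) * (1 - U (z / a)) - 5 * z powr p * deriv U (z / a) / a
     + U (z / a) / b + (z / b + c) * deriv U (z / a) / a"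

definition G2g :: "(real \<Rightarrow> real) \<Rightarrow> real \<Rightarrow> real \<Rightarrow> real \<Rightarrow> real \<Rightarrow> real \<Rightarrow> real" where
  "G2g U p a b c z = 5 * p * (p - 1) * z powr (p - 2) * (1 - U (z / a))
     - 10 * p * z powr (p - 1) * deriv U (z / a) / a
     - 5 * z powr p * deriv (deriv U) (z / a) / a^2
     + 2 * deriv U (z / a) / (a * b) + (z / b + c) * deriv (deriv U) (z / a) / a^2"

lemma ups_chain0:
  assumes "cutoff U" "(g has_real_derivative g') (at x)"
  shows "((\<lambda>x. U (g x)) has_real_derivative deriv U (g x) * g') (at x)"
  using DERIV_chain2[OF ups_deriv0[OF assms(1)] assms(2)] .

lemma ups_chain1:
  assumes "cutoff U" "(g has_real_derivative g') (at x)"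
  shows "((\<lambda>x. deriv U (g x)) has_real_derivative deriv (deriv U) (g x) * g') (at x)"
  using DERIV_chain2[OF ups_deriv1[OF assms(1)] assms(2)] .

lemma Sg_deriv:
  assumes "cutoff U" "z > 0" "a > 0" "b > 0"
  shows "((Sg U p a b c) has_real_derivative Gg U p a b c z) (at z)"
proof -
  have d1: "((\<lambda>z. z powr p) has_real_derivative p * z powr (p - 1)) (at z)"
    using has_real_derivative_powr[OF assms(2)] .
  have d2: "((\<lambda>z. U (z / a)) has_real_derivative deriv U (z / a) * (1 / a)) (at z)"
    using assms(3) by (intro ups_chain0[OF assms(1)]) (auto intro!: derivative_eq_intros)
  have "((\<lambda>z. 5 * z powr p * (1 - U (z / a)) + (z / b + c) * U (z / a)) has_real_derivative
     5 * (p * z powr (p - 1)) * (1 - U (z / a)) + 5 * z powr p * (- (deriv U (z / a) * (1 / a)))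
     + ((1 / b) * U (z / a) + (z / b + c) * (deriv U (z / a) * (1 / a)))) (at z)"
    using assms d1 d2 by (auto intro!: derivative_eq_intros simp: field_simps)
  then show ?thesis unfolding Sg_def Gg_def
    by (rule DERIV_cong) (simp add: field_simps)
qed

lemma Gg_deriv:
  assumes "cutoff U" "z > 0" "a > 0" "b > 0"
  shows "((Gg U p a b c) has_real_derivative G2g U p a b c z) (at z)"
proof -
  have d1: "((\<lambda>z. z powr p) has_real_derivative p * z powr (p - 1)) (at z)"
    using has_real_derivative_powr[OF assms(2)] .
  have d1': "((\<lambda>z. z powr (p - 1)) has_real_derivative (p - 1) * z powr (p - 1 - 1)) (at z)"
    using has_real_derivative_powr[OF assms(2)] .
  have d2: "((\<lambda>z. U (z / a)) has_real_derivative deriv U (z / a) * (1 / a)) (at z)"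
    using assms(3) by (intro ups_chain0[OF assms(1)]) (auto intro!: derivative_eq_intros)
  have d3: "((\<lambda>z. deriv U (z / a)) has_real_derivative deriv (deriv U) (z / a) * (1 / a)) (at z)"
    using assms(3) by (intro ups_chain1[OF assms(1)]) (auto intro!: derivative_eq_intros)
  have e: "z powr (p - 1 - 1) = z powr (p - 2)" by simp
  have e2: "z powr (p - 1) = z powr p / z" using assms(2) by (simp add: powr_diff)
  have e3: "z powr (p - 2) = z powr p / z^2" using assms(2) by (simp add: powr_diff)
  have "((\<lambda>z. 5 * p * z powr (p - 1) * (1 - U (z / a)) - 5 * z powr p * deriv U (z / a) / a
     + U (z / a) / b + (z / b + c) * deriv U (z / a) / a) has_real_derivative
     5 * p * ((p - 1) * z powr (p - 1 - 1)) * (1 - U (z / a)) + 5 * p * z powr (p - 1) * (- (deriv U (z / a) * (1 / a)))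
     - (5 * (p * z powr (p - 1)) * deriv U (z / a) / a + 5 * z powr p * (deriv (deriv U) (z / a) * (1 / a)) / a)
     + (deriv U (z / a) * (1 / a)) / b
     + ((1 / b) * deriv U (z / a) / a + (z / b + c) * (deriv (deriv U) (z / a) * (1 / a)) / a)) (at z)"
    using assms d1 d1' d2 d3 by (auto intro!: derivative_eq_intros simp: field_simps power2_eq_square)
  then show ?thesis unfolding Gg_def G2g_def
    by (rule DERIV_cong) (simp add: e field_simps power2_eq_square)
qed

lemma cont_Gg2:
  assumes "cutoff U" "z > 0" "a > 0" "b > 0"
  shows "isCont (G2g U p a b c) z"
  unfolding G2g_def using assms
  by (auto intro!: continuous_intros isCont_o2[OF _ ups_cont0[OF assms(1)]]
        isCont_o2[OF _ ups_cont1[OF assms(1)]] isCont_o2[OF _ ups_cont2[OF assms(1)]])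


definition pp :: "real \<Rightarrow> real" where "pp gam = 2 / (3 - gam)"
definition phi :: "real \<Rightarrow> real \<Rightarrow> real \<Rightarrow> real" where
  "phi gam z X = min (z powr (pp gam - 1)) ((1 + X) powr (gam - 1))"

abbreviation SS where
  "SS gam U z X \<equiv> Sg U (pp gam) ((1+X) powr (3-gam)) ((1+X) powr (1-gam)) (3 * X^2) z"
abbreviation GG where
  "GG gam U z X \<equiv> Gg U (pp gam) ((1+X) powr (3-gam)) ((1+X) powr (1-gam)) (3 * X^2) z"
abbreviation GG2 where
  "GG2 gam U z X \<equiv> G2g U (pp gam) ((1+X) powr (3-gam)) ((1+X) powr (1-gam)) (3 * X^2) z"

lemma pp_bounds: "-3 < gam \<Longrightarrow> gam \<le> 1 \<Longrightarrow> 1/3 < pp gam \<and> pp gam \<le> 1"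
  unfolding pp_def by (auto simp: field_simps)

lemma key_pow:
  assumes "-3 < gam" "gam \<le> 1" "r > 0"
  shows "(r powr (3 - gam)) powr (pp gam - 1) = r powr (gam - 1)"
    and "(r powr (3 - gam)) powr (pp gam) = r^2"
proof -
  have "(3 - gam) * (pp gam - 1) = gam - 1" using assms unfolding pp_def by (simp add: field_simps)
  then show "(r powr (3 - gam)) powr (pp gam - 1) = r powr (gam - 1)" by (simp add: powr_powr)
  have "(3 - gam) * (pp gam) = 2" using assms unfolding pp_def by (simp add: field_simps)
  then show "(r powr (3 - gam)) powr (pp gam) = r^2" using assms by (simp add: powr_powr powr_realpow)
qed

lemma G_bounds:
  assumes U: "cutoff U" and g: "-3 < gam" "gam \<le> 1" and X: "X \<ge> 0" and z: "z \<ge> 1"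
    and B: "B \<ge> 0" "\<And>s. s > 0 \<Longrightarrow> \<bar>deriv U s\<bar> \<le> B"
  shows "phi gam z X \<le> GG gam U z X \<and> GG gam U z X \<le> (7 + 20 * B) * phi gam z X"
proof -
  define p where "p = pp gam"
  define r where "r = 1 + X"
  define a where "a = r powr (3 - gam)"
  define b where "b = r powr (1 - gam)"
  define s where "s = z / a"
  have r1: "r \<ge> 1" using X r_def by simp
  have p: "1/3 < p" "p \<le> 1" using pp_bounds[OF g] p_def by auto
  have a1: "a \<ge> 1" unfolding a_def using r1 g by (simp add: ge_one_powr_ge_zero)
  have b1: "b \<ge> 1" unfolding b_def using r1 g by (simp add: ge_one_powr_ge_zero)
  have binv: "1 / b = r powr (gam - 1)" unfolding b_def using r1
    by (simp add: powr_minus_divide[symmetric])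
  have s0: "s > 0" using z a1 s_def by simp
  have kp1: "a powr (p - 1) = r powr (gam - 1)" using key_pow[OF g, of r] r1 a_def p_def by simp
  have kp2: "a powr p = r^2" using key_pow[OF g, of r] r1 a_def p_def by simp
  have G: "GG gam U z X = 5 * p * z powr (p - 1) * (1 - U s) + U s / b
       + deriv U s / a * (z / b + 3 * X^2 - 5 * z powr p)"
    unfolding Gg_def p_def[symmetric] r_def[symmetric] a_def[symmetric] b_def[symmetric] s_def[symmetric]
    using a1 by (simp add: field_simps)
  have phi: "phi gam z X = min (z powr (p - 1)) (1 / b)"
    unfolding phi_def p_def binv r_def ..
  have U01: "0 \<le> U s" "U s \<le> 1" using cutoff_D(2)[OF U, of s] s0 by auto
  have Bs: "\<bar>deriv U s\<bar> \<le> B" using B(2) s0 .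
  have zp: "z powr p = z * z powr (p - 1)" using z by (simp add: powr_diff)
  have zpos: "z powr (p - 1) > 0" using z by simp
  consider "s \<le> 1" | "s \<ge> 2" | "1 < s" "s < 2" by linarith
  then show ?thesis
  proof cases
    case 1
    have "U s = 1" using cutoff_D(4)[OF U] s0 1 by auto
    moreover have "deriv U s = 0" using ups_d1_low[OF U s0 1] .
    ultimately have G1: "GG gam U z X = 1 / b" using G by simp
    have "z \<le> a" using 1 a1 s_def by (simp add: field_simps)
    then have "a powr (p - 1) \<le> z powr (p - 1)" using p z by (intro powr_mono2') auto
    then have "phi gam z X = 1 / b" using phi kp1 binv by simp
    moreover have "1 / b \<le> (7 + 20 * B) * (1 / b)" using B(1) b1 by (subst mult.commute, subst times_divide_eq_left) (intro divide_right_mono, auto)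
    ultimately show ?thesis using G1 by simp
  next
    case 2
    have "U s = 0" using cutoff_D(5)[OF U] 2 by auto
    moreover have "deriv U s = 0" using ups_d1_high[OF U 2] .
    ultimately have G1: "GG gam U z X = 5 * p * z powr (p - 1)" using G by simp
    have "a \<le> z" using 2 a1 s_def by (simp add: field_simps)
    then have "z powr (p - 1) \<le> a powr (p - 1)" using p a1 by (intro powr_mono2') auto
    then have ph: "phi gam z X = z powr (p - 1)" using phi kp1 binv by simp
    have "z powr (p - 1) \<le> 5 * p * z powr (p - 1)" using p zpos by simp
    moreover have "5 * p * z powr (p - 1) \<le> 5 * z powr (p - 1)" using p zpos by simp
    moreover have "5 * z powr (p - 1) \<le> (7 + 20 * B) * z powr (p - 1)" using B zpos by simp
    ultimately show ?thesis using G1 ph by simp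
  next
    case 3
    have "a \<le> z" using 3 a1 s_def by (simp add: field_simps)
    then have h1: "z powr (p - 1) \<le> 1 / b" using p a1 powr_mono2'[of "p - 1" a z] kp1 binv by simp
    then have ph: "phi gam z X = z powr (p - 1)" using phi by simp
    have "z \<le> 2 * a" using 3 a1 s_def by (simp add: field_simps)
    then have "(2 * a) powr (p - 1) \<le> z powr (p - 1)" using p a1 z by (intro powr_mono2') auto
    moreover have "(2 * a) powr (p - 1) = 2 powr (p - 1) * (1 / b)" using a1 kp1 binv by (simp add: powr_mult)
    moreover have "2 powr (p - 1) \<ge> 1 / 2"
    proof -
      have "2 powr (p - 1) \<ge> 2 powr (-1)" using p by (intro powr_mono) auto
      then show ?thesis by (simp add: powr_minus)
    qed
    moreover have "1 / b \<le> 2 * (2 powr (p - 1) * (1 / b))"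
    proof -
      have "(1 / b) * 1 \<le> (1 / b) * (2 * 2 powr (p - 1))"
        using \<open>2 powr (p - 1) \<ge> 1 / 2\<close> b1 by (intro mult_left_mono) auto
      then show ?thesis by (simp add: algebra_simps)
    qed
    ultimately have h2: "1 / b \<le> 2 * z powr (p - 1)" by linarith
    have zb: "z / b \<le> 2 * z powr p"
    proof -
      have "z / b = z * (1 / b)" by simp
      also have "\<dots> \<le> z * (2 * z powr (p - 1))" using h2 z by (intro mult_left_mono) auto
      finally show ?thesis using zp by simp
    qed
    have Xr: "X^2 \<le> r^2" using X r_def by (simp add: power_mono)
    have "r^2 \<le> z powr p"
    proof -
      have "a powr p \<le> z powr p" using \<open>a \<le> z\<close> p a1 by (intro powr_mono2) auto
      then show ?thesis using kp2 by simp
    qed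
    then have brk: "z / b + 3 * X^2 - 5 * z powr p \<le> 0" using zb Xr by simp
    have brk2: "z / b + 3 * X^2 - 5 * z powr p \<ge> - 5 * z powr p" using b1 z by simp
    have d0: "deriv U s \<le> 0" using ups_d1_nonpos[OF U s0] .
    have t3: "deriv U s / a * (z / b + 3 * X^2 - 5 * z powr p) \<ge> 0"
      using d0 brk a1 by (simp add: mult_nonpos_nonpos divide_nonpos_pos)
    have "z powr (p - 1) \<le> 5 * p * z powr (p - 1) * (1 - U s) + U s / b"
    proof -
      have "z powr (p - 1) * (1 - U s) \<le> 5 * p * z powr (p - 1) * (1 - U s)"
        using p zpos U01 by (intro mult_right_mono) auto
      moreover have "z powr (p - 1) * U s \<le> U s / b" using h1 U01
        by (metis divide_inverse_commute inverse_eq_divide mult.commute mult_right_mono)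
      ultimately show ?thesis by (simp add: algebra_simps)
    qed
    then have low: "phi gam z X \<le> GG gam U z X" using G t3 ph by simp
    have "deriv U s / a * (z / b + 3 * X^2 - 5 * z powr p) \<le> B / a * (5 * z powr p)"
    proof -
      have "deriv U s / a * (z / b + 3 * X^2 - 5 * z powr p)
          = (- deriv U s / a) * (- (z / b + 3 * X^2 - 5 * z powr p))" by (simp add: algebra_simps)
      also have "\<dots> \<le> (B / a) * (5 * z powr p)"
        using Bs d0 brk brk2 a1 by (intro mult_mono divide_right_mono) auto
      finally show ?thesis .
    qed
    also have "B / a * (5 * z powr p) = 5 * B * s * z powr (p - 1)"
      using zp s_def by (simp add: field_simps)
    also have "\<dots> \<le> 5 * B * 2 * z powr (p - 1)" using 3 B zpos by (intro mult_right_mono mult_left_mono) auto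
    finally have t3u: "deriv U s / a * (z / b + 3 * X^2 - 5 * z powr p) \<le> 10 * B * z powr (p - 1)" by simp
    have "5 * p * z powr (p - 1) * (1 - U s) \<le> 5 * z powr (p - 1)"
    proof -
      have "p * (1 - U s) \<le> 1" using p U01 by (simp add: mult_le_one)
      then have "(5 * (p * (1 - U s))) * z powr (p - 1) \<le> 5 * z powr (p - 1)" using zpos by simp
      then show ?thesis by (simp add: algebra_simps)
    qed
    moreover have "U s / b \<le> 2 * z powr (p - 1)" using h2 U01 b1
      by (smt (verit) divide_right_mono mult_left_le_one_le divide_nonneg_pos le_divide_eq_1 mult.commute times_divide_eq_right)
    ultimately have "GG gam U z X \<le> (7 + 10 * B) * z powr (p - 1)" using G t3u by (simp add: algebra_simps)
    also have "\<dots> \<le> (7 + 20 * B) * z powr (p - 1)" using B zpos by (intro mult_right_mono) auto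
    finally show ?thesis using low ph by simp
  qed
qed


lemma sig_eq: "sigmaf gam U delta l ub x v = SS gam U (delta * x + l) (norm (v - ub))"
  unfolding sigmaf_def Sg_def pp_def by simp

lemma GG_pos:
  assumes U: "cutoff U" and g: "-3 < gam" "gam \<le> 1" and X: "X \<ge> 0" and z: "z \<ge> 1"
  shows "GG gam U z X > 0"
proof -
  obtain B where B: "B \<ge> 0" "\<And>s. s > 0 \<Longrightarrow> \<bar>deriv U s\<bar> \<le> B" using ups_d1_bound[OF U] by blast
  have "phi gam z X > 0" unfolding phi_def using z X by simp
  then show ?thesis using G_bounds[OF U g X z B] by linarith
qed

lemma SS_deriv:
  assumes U: "cutoff U" and X: "X \<ge> 0" and z: "z > 0"
  shows "((\<lambda>z. SS gam U z X) has_real_derivative GG gam U z X) (at z)"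
  using Sg_deriv[OF U z] X by simp

lemma GG_deriv:
  assumes U: "cutoff U" and X: "X \<ge> 0" and z: "z > 0"
  shows "((\<lambda>z. GG gam U z X) has_real_derivative GG2 gam U z X) (at z)"
  using Gg_deriv[OF U z] X by simp

lemma SS_chain:
  assumes U: "cutoff U" and X: "X \<ge> 0" and p: "g x > 0" and d: "(g has_real_derivative g') (at x)"
  shows "((\<lambda>x. SS gam U (g x) X) has_real_derivative GG gam U (g x) X * g') (at x)"
  using DERIV_chain2[of "\<lambda>z. SS gam U z X" "GG gam U (g x) X" g x g' UNIV] SS_deriv[OF U X p] d by simp

lemma GG_chain:
  assumes U: "cutoff U" and X: "X \<ge> 0" and p: "g x > 0" and d: "(g has_real_derivative g') (at x)"
  shows "((\<lambda>x. GG gam U (g x) X) has_real_derivative GG2 gam U (g x) X * g') (at x)"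
  using DERIV_chain2[of "\<lambda>z. GG gam U z X" "GG2 gam U (g x) X" g x g' UNIV] GG_deriv[OF U X p] d by simp

lemma sig_deriv:
  assumes U: "cutoff U" and pos: "delta * x + l > 0"
  shows "((\<lambda>y. sigmaf gam U delta l ub y v) has_real_derivative
            delta * GG gam U (delta * x + l) (norm (v - ub))) (at x)"
proof -
  have "((\<lambda>y. SS gam U (delta * y + l) (norm (v - ub))) has_real_derivative
            GG gam U (delta * x + l) (norm (v - ub)) * delta) (at x)"
    by (rule SS_chain[where g = "\<lambda>y. delta * y + l", OF U _ pos]) (auto intro!: derivative_eq_intros)
  then show ?thesis unfolding sig_eq by (simp add: mult.commute)
qed

lemma sigx_eq:
  assumes U: "cutoff U" and pos: "delta * x + l > 0"
  shows "sigmax gam U delta l ub x v = delta * GG gam U (delta * x + l) (norm (v - ub))"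
  unfolding sigmax_def using sig_deriv[OF U pos] by (rule DERIV_imp_deriv)

lemma sigxx_eq:
  assumes U: "cutoff U" and pos: "delta * x + l > 0"
  shows "sigmaxx gam U delta l ub x v = delta^2 * GG2 gam U (delta * x + l) (norm (v - ub))"
proof -
  have "((\<lambda>y. delta * GG gam U (delta * y + l) (norm (v - ub))) has_real_derivative
            delta * (GG2 gam U (delta * x + l) (norm (v - ub)) * delta)) (at x)"
    by (intro DERIV_cmult GG_chain[where g = "\<lambda>y. delta * y + l", OF U _ pos]) (auto intro!: derivative_eq_intros)
  then have "((\<lambda>y. sigmax gam U delta l ub y v) has_real_derivative
            delta * (GG2 gam U (delta * x + l) (norm (v - ub)) * delta)) (at x)"
  proof (rule has_field_derivative_transform_within_open[where S = "{y. delta * y + l > 0}"])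
    show "open {y. delta * y + l > 0}" by (auto intro!: open_Collect_less continuous_intros)
    show "x \<in> {y. delta * y + l > 0}" using pos by simp
    show "\<And>y. y \<in> {y. delta * y + l > 0} \<Longrightarrow> delta * GG gam U (delta * y + l) (norm (v - ub)) = sigmax gam U delta l ub y v"
      using sigx_eq[OF U] by simp
  qed
  then show ?thesis unfolding sigmaxx_def using DERIV_imp_deriv by (simp add: power2_eq_square algebra_simps)
qed

lemma kappa_eq:
  assumes U: "cutoff U" and g: "-3 < gam" "gam \<le> 1" and d: "delta > 0" and l: "l \<ge> 1" and x: "x \<ge> 0"
  shows "kappa m hb gam U delta l rho T ub x v =
    - (m / 2) * (ln (GG gam U (delta * x + l) (norm (v - ub))) - ln (GG gam U l (norm (v - ub))))
    - hb * (SS gam U (delta * x + l) (norm (v - ub)) - SS gam U l (norm (v - ub)))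
    + x * (nuf gam rho T ub v / v $ 3)"
proof -
  define X where "X = norm (v - ub)"
  define c where "c = nuf gam rho T ub v / v $ 3"
  have X: "X \<ge> 0" unfolding X_def by simp
  define fc where "fc y = - m * (delta * GG2 gam U (delta * y + l) X) / (2 * GG gam U (delta * y + l) X)
      - hb * (delta * GG gam U (delta * y + l) X) + c" for y
  define F where "F y = - (m / 2) * ln (GG gam U (delta * y + l) X) - hb * SS gam U (delta * y + l) X + y * c" for y
  have zpos: "delta * y + l \<ge> 1" if "y \<ge> 0" for y using d l that by (simp add: add_increasing)
  have Gp: "GG gam U (delta * y + l) X > 0" if "y \<ge> 0" for y using GG_pos[OF U g X zpos[OF that]] .
  have "kappa m hb gam U delta l rho T ub x v = (\<integral>y\<in>{0..x}. fc y \<partial>lborel)"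
    unfolding kappa_def
  proof (rule set_lebesgue_integral_cong)
    show "{0..x} \<in> sets lborel" by simp
    show "\<forall>y. y \<in> {0..x} \<longrightarrow> - m * sigmaxx gam U delta l ub y v / (2 * sigmax gam U delta l ub y v) -
          hb * sigmax gam U delta l ub y v + nuf gam rho T ub v / v $ 3 = fc y"
    proof (intro allI impI)
      fix y assume y: "y \<in> {0..x}"
      then have p: "delta * y + l > 0" using zpos by force
      show "- m * sigmaxx gam U delta l ub y v / (2 * sigmax gam U delta l ub y v) -
          hb * sigmax gam U delta l ub y v + nuf gam rho T ub v / v $ 3 = fc y"
        unfolding sigxx_eq[OF U p] sigx_eq[OF U p] fc_def c_def X_def using d
        by (simp add: power2_eq_square)
    qed
  qed
  also have "\<dots> = F x - F 0"
    unfolding set_lebesgue_integral_def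
  proof (rule integral_FTC_atLeastAtMost[OF x])
    fix y assume y: "0 \<le> y" "y \<le> x"
    have p: "delta * y + l > 0" using zpos[OF y(1)] by simp
    have d1: "((\<lambda>y. GG gam U (delta * y + l) X) has_real_derivative GG2 gam U (delta * y + l) X * delta) (at y)"
      by (rule GG_chain[where g = "\<lambda>y. delta * y + l", OF U X p]) (auto intro!: derivative_eq_intros)
    have d2: "((\<lambda>y. SS gam U (delta * y + l) X) has_real_derivative GG gam U (delta * y + l) X * delta) (at y)"
      by (rule SS_chain[where g = "\<lambda>y. delta * y + l", OF U X p]) (auto intro!: derivative_eq_intros)
    have d3: "((\<lambda>y. ln (GG gam U (delta * y + l) X)) has_real_derivative
        (GG2 gam U (delta * y + l) X * delta) / GG gam U (delta * y + l) X) (at y)"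
      using DERIV_chain2[OF DERIV_ln_divide[OF Gp[OF y(1)]] d1] by (simp add: field_simps)
    have "(F has_real_derivative (- (m / 2) * ((GG2 gam U (delta * y + l) X * delta) / GG gam U (delta * y + l) X)
        - hb * (GG gam U (delta * y + l) X * delta) + 1 * c)) (at y)"
      unfolding F_def by (intro DERIV_add DERIV_diff DERIV_cmult d2 d3 DERIV_cmult_right DERIV_ident)
    then have "(F has_real_derivative fc y) (at y)"
      by (rule DERIV_cong) (simp add: fc_def field_simps)
    then show "(F has_vector_derivative fc y) (at y within {0..x})"
      by (simp add: has_real_derivative_iff_has_vector_derivative has_vector_derivative_at_within)
  next
    show "continuous_on {0..x} fc"
    proof (rule continuous_at_imp_continuous_on, rule ballI)
      fix y assume "y \<in> {0..x}"
      then have y: "y \<ge> 0" by simp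
      have p: "delta * y + l > 0" using zpos[OF y] by simp
      have c1: "isCont (\<lambda>y. GG gam U (delta * y + l) X) y"
        by (rule isCont_o2[where g = "\<lambda>z. GG gam U z X" and f = "\<lambda>y. delta * y + l", OF _ DERIV_isCont[OF GG_deriv[OF U X p]]]) (auto intro!: continuous_intros)
      have c2: "isCont (\<lambda>y. GG2 gam U (delta * y + l) X) y"
      proof (rule isCont_o2[where g = "\<lambda>z. GG2 gam U z X" and f = "\<lambda>y. delta * y + l", OF _ ], goal_cases)
        case 1 show ?case by (auto intro!: continuous_intros)
      next
        case 2 show ?case using cont_Gg2[OF U p] X by simp
      qed
      show "isCont fc y" unfolding fc_def using Gp[OF y]
        by (auto intro!: continuous_intros c1 c2)
    qed
  qed
  also have "F x - F 0 = - (m / 2) * (ln (GG gam U (delta * x + l) X) - ln (GG gam U l X))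
    - hb * (SS gam U (delta * x + l) X - SS gam U l X) + x * c"
    unfolding F_def by (simp add: algebra_simps)
  finally show ?thesis unfolding X_def c_def .
qed


lemma emeasure_cube:
  fixes c :: "real^3" assumes R: "R \<ge> 0"
  shows "emeasure lborel (cbox (c - (\<chi> i. R)) (c + (\<chi> i. R))) = ennreal ((2 * R)^3)"
proof -
  have ne: "cbox (c - (\<chi> i. R)) (c + (\<chi> i. R)) \<noteq> {}"
  proof -
    have "c \<in> cbox (c - (\<chi> i. R)) (c + (\<chi> i. R))" using R by (simp add: mem_box_cart)
    then show ?thesis by blast
  qed
  have "measure lborel (cbox (c - (\<chi> i. R)) (c + (\<chi> i. R))) = (2 * R)^3"
    using content_cbox_cart[OF ne] by simp
  moreover have "emeasure lborel (cbox (c - (\<chi> i. R)) (c + (\<chi> i. R)))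
      = ennreal (measure lborel (cbox (c - (\<chi> i. R)) (c + (\<chi> i. R))))"
    by (simp add: emeasure_eq_measure2 emeasure_lborel_cbox_finite)
  ultimately show ?thesis by simp
qed

lemma in_cube:
  fixes c w :: "real^3" assumes "norm (w - c) \<le> R"
  shows "w \<in> cbox (c - (\<chi> i. R)) (c + (\<chi> i. R))"
proof -
  have "\<bar>(w - c) $ i\<bar> \<le> R" for i using component_le_norm_cart[of "w - c" i] assms by linarith
  then have "\<bar>w $ i - c $ i\<bar> \<le> R" for i by simp
  then show ?thesis by (simp add: mem_box_cart abs_le_iff) (smt (verit))
qed

lemma ennreal_term_le_suminf: "(g :: nat \<Rightarrow> ennreal) k \<le> (\<Sum>j. g j)"
proof -
  have "sum g {k} \<le> suminf g" by (rule sum_le_suminf) auto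
  then show ?thesis by simp
qed

lemma shell_integrable:
  fixes f :: "real^3 \<Rightarrow> real" and c :: "real^3"
  assumes meas: "f \<in> borel_measurable lborel" and nn: "\<And>w. f w \<ge> 0"
    and cover: "\<And>w. f w \<noteq> 0 \<Longrightarrow> \<exists>k. f w \<le> a k \<and> norm (w - c) \<le> R k"
    and a: "\<And>k. a k \<ge> 0" and R: "\<And>k. R k \<ge> 0"
    and summ: "summable (\<lambda>k. a k * (2 * R k)^3)"
  shows "integrable lborel f"
proof -
  define Bx where "Bx k = cbox (c - (\<chi> i. R k)) (c + (\<chi> i. R k))" for k
  have pw: "ennreal (norm (f w)) \<le> (\<Sum>k. ennreal (a k) * indicator (Bx k) w)" for w
  proof (cases "f w = 0")
    case True then show ?thesis by simp
  next
    case False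
    obtain k where k: "f w \<le> a k" "norm (w - c) \<le> R k" using cover[OF False] by blast
    have "ennreal (norm (f w)) \<le> ennreal (a k) * indicator (Bx k) w"
      using k nn[of w] in_cube[OF k(2)] by (simp add: Bx_def)
    also have "\<dots> \<le> (\<Sum>j. ennreal (a j) * indicator (Bx j) w)"
      by (rule ennreal_term_le_suminf)
    finally show ?thesis .
  qed
  have "(\<integral>\<^sup>+w. ennreal (norm (f w)) \<partial>lborel) \<le> (\<integral>\<^sup>+w. (\<Sum>k. ennreal (a k) * indicator (Bx k) w) \<partial>lborel)"
    by (intro nn_integral_mono pw)
  also have "\<dots> = (\<Sum>k. \<integral>\<^sup>+w. ennreal (a k) * indicator (Bx k) w \<partial>lborel)"
    by (rule nn_integral_suminf) (auto simp: Bx_def)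
  also have "\<dots> = (\<Sum>k. ennreal (a k * (2 * R k)^3))"
    by (subst nn_integral_cmult_indicator) (auto simp: Bx_def emeasure_cube[OF R] ennreal_mult a R)
  also have "\<dots> = ennreal (\<Sum>k. a k * (2 * R k)^3)"
    by (rule suminf_ennreal_eq) (use summ summable_sums a R in auto)
  also have "\<dots> < \<infinity>" by simp
  finally show ?thesis using meas by (simp add: integrable_iff_bounded)
qed

lemma decay_integrable:
  fixes c :: "real^3"
  shows "integrable lborel (\<lambda>w. (1 + norm (w - c)) powr (-4))"
proof (rule shell_integrable[where c = c and a = "\<lambda>k. (1/16)^k" and R = "\<lambda>k. 2^(k+1)"])
  show "(\<lambda>w. (1 + norm (w - c)) powr (-4)) \<in> borel_measurable lborel" by measurable
  show "\<And>w. 0 \<le> (1 + norm (w - c)) powr (-4)" by simp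
  show "\<And>k. 0 \<le> (1/16::real)^k" by simp
  show "\<And>k. 0 \<le> (2::real)^(k+1)" by simp
  have "(\<lambda>k. (1/16::real)^k * (2 * 2^(k+1))^3) = (\<lambda>k. 64 * (1/2)^k)"
  proof (rule ext)
    fix k :: nat
    have e8: "(2^k::real)^3 = 8^k"
    proof -
      have "(8::real)^k = (2*2*2)^k" by simp
      also have "\<dots> = 2^k*2^k*2^k" by (simp only: power_mult_distrib)
      finally show ?thesis by (simp add: power3_eq_cube)
    qed
    have "(2 * 2^(k+1))^3 = (4 * 2^k::real)^3" by simp
    also have "\<dots> = 64 * (2^k)^3" by (simp add: power_mult_distrib)
    finally have a: "(2 * 2^(k+1))^3 = (64::real) * 8^k" using e8 by simp
    have b: "(1/16::real)^k * 8^k = (1/2)^k"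
    proof -
      have "(1/16::real)^k * 8^k = ((1/16) * 8)^k" by (rule power_mult_distrib[symmetric])
      then show ?thesis by simp
    qed
    have "(1/16::real)^k * (64 * 8^k) = 64 * ((1/16)^k * 8^k)" by (rule mult.left_commute)
    then show "(1/16::real)^k * (2 * 2^(k+1))^3 = 64 * (1/2)^k"
      unfolding a b .
  qed
  then show "summable (\<lambda>k. (1/16::real)^k * (2 * 2^(k+1))^3)" by (simp add: summable_mult)
  fix w :: "real^3"
  define X where "X = 1 + norm (w - c)"
  have X1: "X \<ge> 1" unfolding X_def by simp
  obtain n where n: "X < 2^n" using real_arch_pow[of 2 X] by auto
  have "(2::real)^n \<le> 2^(n+1)" by (rule power_increasing) auto
  then have ex: "\<exists>n. X < 2^(n+1)" using n by (intro exI[of _ n]) linarith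
  then obtain k where k: "X < 2^(k+1)" "\<forall>j<k. \<not> X < 2^(j+1)" using exists_least_iff[THEN iffD1, OF ex] by blast
  have lo: "2^k \<le> X"
  proof (cases k)
    case 0 then show ?thesis using X1 by simp
  next
    case (Suc j) then show ?thesis using k(2)[rule_format, of j] by simp
  qed
  have "X powr (-4) \<le> (2^k) powr (-4)" by (rule powr_mono2') (use lo in auto)
  also have "(2^k) powr (-4::real) = (1/16::real)^k"
  proof -
    have p: "(2^k::real) powr 4 = (2^k)^4" by (rule powr_numeral) simp
    have q: "((2::real)^k)^4 = 16^k"
    proof -
      have "((2::real)^k)^4 = 2^(k*4)" by (simp only: power_mult)
      also have "\<dots> = (2^4)^k" by (simp only: mult.commute[of k 4] power_mult)
      finally show ?thesis by simp
    qed
    have "(2^k) powr (-4::real) = inverse ((2^k) powr 4)" by (rule powr_minus)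
    also have "\<dots> = inverse (16^k)" using p q by simp
    also have "\<dots> = (1/16)^k" by (simp add: power_one_over inverse_eq_divide)
    finally show ?thesis .
  qed
  finally have "X powr (-4) \<le> (1/16)^k" .
  moreover have "norm (w - c) \<le> 2^(k+1)" using k(1) unfolding X_def by linarith
  ultimately show "\<exists>k. (1 + norm (w - c)) powr (-4) \<le> (1/16)^k \<and> norm (w - c) \<le> 2^(k+1)"
    unfolding X_def by blast
qed

lemma sing_integrable:
  fixes c :: "real^3" assumes g: "-3 < gam" "gam < 0"
  shows "integrable lborel (\<lambda>w. indicator (cball c 1) w * norm (w - c) powr gam)"
proof -
  define \<rho> where "\<rho> = (1/2::real) powr gam"
  have rho_pos: "\<rho> > 0" unfolding \<rho>_def by simp
  have rho8: "\<rho> < 8"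
  proof -
    have "\<rho> = 2 powr (- gam)" unfolding \<rho>_def by (simp add: powr_divide powr_minus inverse_eq_divide)
    also have "\<dots> < 2 powr 3" using g by (intro powr_less_mono) auto
    finally show ?thesis by simp
  qed
  show ?thesis
  proof (rule shell_integrable[where c = c and a = "\<lambda>k. \<rho>^(k+1)" and R = "\<lambda>k. (1/2)^k"])
    have m1: "(\<lambda>x. norm (x - c)) \<in> borel_measurable borel"
      by (intro borel_measurable_continuous_onI continuous_intros)
    have m2: "cball c 1 \<in> sets borel" by simp
    show "(\<lambda>w. indicator (cball c 1) w * norm (w - c) powr gam) \<in> borel_measurable lborel"
      using m1 m2 by (simp add: borel_measurable_times borel_measurable_indicator powr_real_measurable)
    show "\<And>w. 0 \<le> indicator (cball c 1) w * norm (w - c) powr gam" by simp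
    show "\<And>k. 0 \<le> \<rho>^(k+1)" using rho_pos by simp
    show "\<And>k. 0 \<le> (1/2::real)^k" by simp
    have eq: "(\<lambda>k. \<rho>^(k+1) * (2 * (1/2::real)^k)^3) = (\<lambda>k. (8 * \<rho>) * (\<rho> / 8)^k)"
    proof (rule ext)
      fix k :: nat
      have e8: "((1/2::real)^k)^3 = (1/8)^k"
      proof -
        have "(1/8::real)^k = ((1/2)*(1/2)*(1/2))^k" by simp
        also have "\<dots> = (1/2)^k*(1/2)^k*(1/2)^k" by (simp only: power_mult_distrib)
        finally show ?thesis by (simp add: power3_eq_cube)
      qed
      have "(2 * (1/2::real)^k)^3 = 8 * ((1/2)^k)^3" by (simp add: power_mult_distrib)
      also have "\<dots> = 8 * (1/8)^k" using e8 by simp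
      finally have a: "(2 * (1/2::real)^k)^3 = 8 * (1/8)^k" .
      have b: "\<rho>^k * (1/8)^k = (\<rho> / 8)^k" by (simp add: power_mult_distrib[symmetric])
      have "\<rho>^(k+1) * (8 * (1/8)^k) = (8 * \<rho>) * (\<rho>^k * (1/8)^k)" by (simp add: algebra_simps)
      then show "\<rho>^(k+1) * (2 * (1/2::real)^k)^3 = (8 * \<rho>) * (\<rho> / 8)^k" unfolding a b .
    qed
    have "summable (\<lambda>k. (\<rho> / 8)^k)" using rho_pos rho8 by (intro summable_geometric) simp
    then show "summable (\<lambda>k. \<rho>^(k+1) * (2 * (1/2::real)^k)^3)" unfolding eq by (rule summable_mult)
    fix w :: "real^3"
    assume nz: "indicator (cball c 1) w * norm (w - c) powr gam \<noteq> 0"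
    define X where "X = norm (w - c)"
    have wc: "w \<in> cball c 1" using nz by (cases "w \<in> cball c 1") auto
    then have X1: "X \<le> 1" unfolding X_def by (simp add: dist_norm norm_minus_commute)
    have X0: "X > 0" using nz unfolding X_def by (auto split: split_indicator)
    obtain n where n: "(1/2::real)^n < X" using real_arch_pow_inv[OF X0, of "1/2"] by auto
    have "(1/2::real)^(n+1) \<le> (1/2)^n" by (rule power_decreasing) auto
    then have ex: "\<exists>n. (1/2::real)^(n+1) < X" using n by (intro exI[of _ n]) linarith
    then obtain k where k: "(1/2::real)^(k+1) < X" "\<forall>j<k. \<not> (1/2::real)^(j+1) < X"
      using exists_least_iff[THEN iffD1, OF ex] by blast
    have up: "X \<le> (1/2)^k"
    proof (cases k)
      case 0 then show ?thesis using X1 by simp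
    next
      case (Suc j) then show ?thesis using k(2)[rule_format, of j] by simp
    qed
    have "X powr gam \<le> ((1/2)^(k+1)) powr gam" by (rule powr_mono2') (use g k(1) in auto)
    also have "((1/2::real)^(k+1)) powr gam = \<rho>^(k+1)" unfolding \<rho>_def
    proof -
      have "(1/2::real)^(k+1) = (1/2) powr (real (k+1))" by (rule powr_realpow[symmetric]) simp
      then have "((1/2::real)^(k+1)) powr gam = (1/2) powr (real (k+1) * gam)" by (simp add: powr_powr)
      also have "\<dots> = ((1/2) powr gam)^(k+1)" by (rule powr_power[symmetric]) simp
      finally show "((1/2::real)^(k+1)) powr gam = ((1/2) powr gam)^(k+1)" .
    qed
    finally have "indicator (cball c 1) w * X powr gam \<le> \<rho>^(k+1)" using wc by simp
    then show "\<exists>k. indicator (cball c 1) w * norm (w - c) powr gam \<le> \<rho>^(k+1) \<and> norm (w - c) \<le> (1/2)^k"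
      using up unfolding X_def by blast
  qed
qed


lemma quad_le: fixes a b X :: real assumes "a > 0" shows "b * X - a * X^2 \<le> b^2 / (4 * a)"
proof -
  have "0 \<le> (2 * a * X - b)^2 / (4 * a)" using assms by simp
  also have "(2 * a * X - b)^2 / (4 * a) = a * X^2 - b * X + b^2 / (4 * a)"
    using assms by (simp add: field_simps power2_eq_square)
  finally show ?thesis by simp
qed

lemma one_plus_powr_le_exp: fixes X e :: real assumes "X \<ge> 0" "e \<ge> 0" shows "(1 + X) powr e \<le> exp (e * X)"
proof -
  have "(1 + X) powr e = exp (e * ln (1 + X))" using assms by (simp add: powr_def add_nonneg_eq_0_iff)
  also have "\<dots> \<le> exp (e * X)" using assms ln_add_one_self_le_self by (simp add: mult_left_mono)
  finally show ?thesis .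
qed

lemma gauss_le_decay:
  fixes a b X :: real
  assumes a: "a > 0" and X: "X \<ge> 0"
  shows "exp (b * X - a * X^2) \<le> exp ((\<bar>b\<bar> + 4)^2 / (4 * a)) * (1 + X) powr (-4)"
proof -
  have "(1 + X) powr 4 * exp (b * X - a * X^2) \<le> exp (4 * X) * exp (b * X - a * X^2)"
    using one_plus_powr_le_exp[OF X, of 4] by (intro mult_right_mono) auto
  also have "\<dots> = exp ((4 + b) * X - a * X^2)" by (simp add: algebra_simps flip: exp_add)
  also have "\<dots> \<le> exp ((\<bar>b\<bar> + 4) * X - a * X^2)" using X by (intro exp_mono) (simp add: mult_right_mono)
  also have "\<dots> \<le> exp ((\<bar>b\<bar> + 4)^2 / (4 * a))" using quad_le[OF a] by simp
  finally have h: "(1 + X) powr 4 * exp (b * X - a * X^2) \<le> exp ((\<bar>b\<bar> + 4)^2 / (4 * a))" .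
  have p: "(1 + X) powr 4 > 0" using X by simp
  have "exp (b * X - a * X^2) = ((1 + X) powr 4 * exp (b * X - a * X^2)) * (1 + X) powr (-4)"
    using p X by (simp add: powr_minus field_simps)
  also have "\<dots> \<le> exp ((\<bar>b\<bar> + 4)^2 / (4 * a)) * (1 + X) powr (-4)"
    using h by (intro mult_right_mono) auto
  finally show ?thesis .
qed

lemma gauss_integrable:
  fixes c :: "real^3" and a b :: real assumes a: "a > 0"
  shows "integrable lborel (\<lambda>w. exp (b * norm (w - c) - a * (norm (w - c))^2))"
proof (rule Bochner_Integration.integrable_bound[where f = "\<lambda>w. exp ((\<bar>b\<bar> + 4)^2 / (4 * a)) * (1 + norm (w - c)) powr (-4)"])
  show "integrable lborel (\<lambda>w. exp ((\<bar>b\<bar> + 4)^2 / (4 * a)) * (1 + norm (w - c)) powr (-4))"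
    using decay_integrable[of c] by simp
  show "(\<lambda>w. exp (b * norm (w - c) - a * (norm (w - c))^2)) \<in> borel_measurable lborel"
    by (simp add: borel_measurable_continuous_onI continuous_intros)
  show "AE w in lborel. norm (exp (b * norm (w - c) - a * (norm (w - c))^2))
      \<le> norm (exp ((\<bar>b\<bar> + 4)^2 / (4 * a)) * (1 + norm (w - c)) powr (-4))"
    using gauss_le_decay[OF a, of "norm (w - c)" b for w] by (intro AE_I2) simp
qed

lemma Maxw_alt: "Maxw rho T ub w = rho / (2 * pi * T) powr (3/2) * exp (0 * norm (w - ub) - (1 / (2 * T)) * (norm (w - ub))^2)"
  unfolding Maxw_def by simp

lemma Maxw_pos: "rho > 0 \<Longrightarrow> T > 0 \<Longrightarrow> Maxw rho T ub w > 0"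
  unfolding Maxw_def by simp

lemma Maxw_le: "rho > 0 \<Longrightarrow> T > 0 \<Longrightarrow> Maxw rho T ub w \<le> rho / (2 * pi * T) powr (3/2)"
proof -
  assume rho: "rho > 0" and T: "T > 0"
  have "exp (- ((norm (w - ub))^2) / (2 * T)) \<le> 1" using T by simp
  then show ?thesis unfolding Maxw_def using rho T
    by (intro mult_left_le) (auto intro!: divide_nonneg_pos)
qed

lemma nu_integrable:
  fixes v ub :: "real^3"
  assumes g: "-3 < gam" "gam \<le> 1" and rho: "rho > 0" and T: "T > 0"
  shows "integrable lborel (\<lambda>w. norm (w - v) powr gam * Maxw rho T ub w)"
proof -
  define M0 where "M0 = rho / (2 * pi * T) powr (3/2)"
  have M0: "M0 > 0" unfolding M0_def using rho T by simp
  have aT: "1 / (2 * T) > 0" using T by simp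
  have meas: "(\<lambda>w. norm (w - v) powr gam * Maxw rho T ub w) \<in> borel_measurable lborel"
  proof -
    have m1: "(\<lambda>x. norm (x - v)) \<in> borel_measurable borel"
      by (intro borel_measurable_continuous_onI continuous_intros)
    have m2: "(\<lambda>w. Maxw rho T ub w) \<in> borel_measurable borel"
      unfolding Maxw_def using T by (intro borel_measurable_continuous_onI continuous_intros) auto
    show ?thesis using m1 m2 by (simp add: borel_measurable_times powr_real_measurable)
  qed
  show ?thesis
  proof (cases "gam < 0")
    case True
    show ?thesis
    proof (rule Bochner_Integration.integrable_bound[OF _ meas])
      show "integrable lborel (\<lambda>w. M0 * (indicator (cball v 1) w * norm (w - v) powr gam)
          + M0 * exp (0 * norm (w - ub) - (1 / (2 * T)) * (norm (w - ub))^2))"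
        using sing_integrable[OF g(1) True, of v] gauss_integrable[OF aT, where c=ub and b=0] by simp
      show "AE w in lborel. norm (norm (w - v) powr gam * Maxw rho T ub w)
        \<le> norm (M0 * (indicator (cball v 1) w * norm (w - v) powr gam)
          + M0 * exp (0 * norm (w - ub) - (1 / (2 * T)) * (norm (w - ub))^2))"
      proof (intro AE_I2)
        fix w :: "real^3"
        have Mp: "Maxw rho T ub w > 0" using Maxw_pos[OF rho T] .
        have Ml: "Maxw rho T ub w \<le> M0" using Maxw_le[OF rho T] M0_def by simp
        have Me: "Maxw rho T ub w = M0 * exp (0 * norm (w - ub) - (1 / (2 * T)) * (norm (w - ub))^2)"
          using Maxw_alt M0_def by simp
        have pw: "norm (w - v) powr gam \<le> indicator (cball v 1) w * norm (w - v) powr gam + 1"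
        proof (cases "w \<in> cball v 1")
          case True then show ?thesis by simp
        next
          case False
          then have "norm (w - v) \<ge> 1" by (simp add: dist_norm norm_minus_commute)
          then have "norm (w - v) powr gam \<le> 1 powr gam" using True by (intro powr_mono2') auto
          then show ?thesis using False by simp
        qed
        have "norm (w - v) powr gam * Maxw rho T ub w
            \<le> (indicator (cball v 1) w * norm (w - v) powr gam + 1) * Maxw rho T ub w"
          using pw Mp by (intro mult_right_mono) auto
        also have "\<dots> = indicator (cball v 1) w * norm (w - v) powr gam * Maxw rho T ub w + Maxw rho T ub w"
          by (simp add: algebra_simps)
        also have "\<dots> \<le> indicator (cball v 1) w * norm (w - v) powr gam * M0 + Maxw rho T ub w"
          using Ml by (intro add_right_mono mult_left_mono) auto
        finally show "norm (norm (w - v) powr gam * Maxw rho T ub w)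
          \<le> norm (M0 * (indicator (cball v 1) w * norm (w - v) powr gam)
            + M0 * exp (0 * norm (w - ub) - (1 / (2 * T)) * (norm (w - ub))^2))"
          using Mp M0 Me by (simp add: algebra_simps)
      qed
    qed
  next
    case False
    define d where "d = norm (v - ub)"
    show ?thesis
    proof (rule Bochner_Integration.integrable_bound[OF _ meas])
      show "integrable lborel (\<lambda>w. (M0 * (1 + d)) * exp (1 * norm (w - ub) - (1 / (2 * T)) * (norm (w - ub))^2))"
        using gauss_integrable[OF aT, where c=ub and b=1] by simp
      show "AE w in lborel. norm (norm (w - v) powr gam * Maxw rho T ub w)
        \<le> norm ((M0 * (1 + d)) * exp (1 * norm (w - ub) - (1 / (2 * T)) * (norm (w - ub))^2))"
      proof (intro AE_I2)
        fix w :: "real^3"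
        define X where "X = norm (w - ub)"
        have X0: "X \<ge> 0" "d \<ge> 0" unfolding X_def d_def by auto
        have Mp: "Maxw rho T ub w > 0" using Maxw_pos[OF rho T] .
        have Me: "Maxw rho T ub w = M0 * exp (- (1 / (2 * T)) * X^2)"
          using Maxw_alt M0_def X_def by simp
        have tri: "norm (w - v) \<le> X + d" unfolding X_def d_def
          using norm_triangle_ineq[of "w - ub" "ub - v"] by (simp add: norm_minus_commute)
        have pw: "norm (w - v) powr gam \<le> 1 + norm (w - v)"
        proof (cases "norm (w - v) \<le> 1")
          case True
          then have "norm (w - v) powr gam \<le> 1" using False by (intro powr_le1) auto
          then show ?thesis by (smt (verit) norm_ge_zero)
        next
          case c2: False
          then have "norm (w - v) powr gam \<le> norm (w - v) powr 1" using g by (intro powr_mono) auto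
          then show ?thesis using c2 by simp
        qed
        also have "\<dots> \<le> (1 + d) * (1 + X)"
        proof -
          have xd: "0 \<le> X * d" using X0 by simp
          have "(1 + d) * (1 + X) = 1 + X + d + X * d" by (simp add: algebra_simps)
          then show ?thesis using tri xd by linarith
        qed
        also have "\<dots> \<le> (1 + d) * exp X" using X0 exp_ge_add_one_self[of X] by (intro mult_left_mono) auto
        finally have pw2: "norm (w - v) powr gam \<le> (1 + d) * exp X" .
        have "norm (w - v) powr gam * Maxw rho T ub w \<le> (1 + d) * exp X * (M0 * exp (- (1 / (2 * T)) * X^2))"
          using mult_right_mono[OF pw2, of "Maxw rho T ub w"] Mp Me by simp
        also have "\<dots> = (M0 * (1 + d)) * exp (1 * X - (1 / (2 * T)) * X^2)"
          by (simp add: algebra_simps flip: exp_add)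
        finally show "norm (norm (w - v) powr gam * Maxw rho T ub w)
          \<le> norm ((M0 * (1 + d)) * exp (1 * norm (w - ub) - (1 / (2 * T)) * (norm (w - ub))^2))"
          using Mp M0 X0 unfolding X_def by simp
      qed
    qed
  qed
qed

lemma nu_pos:
  fixes v ub :: "real^3"
  assumes g: "-3 < gam" "gam \<le> 1" and rho: "rho > 0" and T: "T > 0"
  shows "nuf gam rho T ub v > 0"
proof -
  have int: "integrable lborel (\<lambda>w. norm (w - v) powr gam * Maxw rho T ub w)" by (rule nu_integrable[OF g rho T])
  have nn: "AE w in lborel. 0 \<le> norm (w - v) powr gam * Maxw rho T ub w"
    using Maxw_pos[OF rho T] by (intro AE_I2 mult_nonneg_nonneg) (auto simp: less_imp_le)
  have ge: "nuf gam rho T ub v \<ge> 0" unfolding nuf_def using nn by (rule integral_nonneg_AE)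
  have "nuf gam rho T ub v \<noteq> 0"
  proof
    assume "nuf gam rho T ub v = 0"
    then have A: "AE w in lborel. norm (w - v) powr gam * Maxw rho T ub w = 0"
      using integral_nonneg_eq_0_iff_AE[OF int nn] unfolding nuf_def by simp
    have B: "AE w in lborel. w \<noteq> v" by (rule AE_lborel_singleton)
    have pos: "\<And>w. w \<noteq> v \<Longrightarrow> norm (w - v) powr gam * Maxw rho T ub w \<noteq> 0"
      using Maxw_pos[OF rho T] by (simp add: less_imp_neq[symmetric])
    from A B have "almost_everywhere (lborel :: (real^3) measure) (\<lambda>_. False)"
    proof eventually_elim
      case (elim w)
      then show False using pos by blast
    qed
    then have "ae_filter (lborel :: (real^3) measure) = bot" using trivial_limit_def by blast
    then show False unfolding ae_filter_eq_bot_iff by simp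
  qed
  then show ?thesis using ge by simp
qed


lemma powr_le1_neg: "z \<ge> 1 \<Longrightarrow> e \<le> 0 \<Longrightarrow> z powr e \<le> (1::real)"
  using powr_mono[of e 0 z] by simp

locale cut =
  fixes U :: "real \<Rightarrow> real" and gam B :: real
  assumes U: "cutoff U" and g1: "-3 < gam" and g2: "gam \<le> 1"
    and B0: "B \<ge> 0" and Bb: "\<And>s. s > 0 \<Longrightarrow> \<bar>deriv U s\<bar> \<le> B"
begin

definition "c2 = 7 + 20 * B"

lemma c2_ge: "c2 \<ge> 7" unfolding c2_def using B0 by simp

lemma GB: "X \<ge> 0 \<Longrightarrow> z \<ge> 1 \<Longrightarrow> phi gam z X \<le> GG gam U z X \<and> GG gam U z X \<le> c2 * phi gam z X"
  unfolding c2_def using G_bounds[OF U g1 g2 _ _ B0 Bb] by blast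

lemma phi_pos: "X \<ge> 0 \<Longrightarrow> z \<ge> 1 \<Longrightarrow> phi gam z X > 0"
  unfolding phi_def by simp

lemma phi_le1: "X \<ge> 0 \<Longrightarrow> z \<ge> 1 \<Longrightarrow> phi gam z X \<le> 1"
  unfolding phi_def using pp_bounds[OF g1 g2] powr_le1_neg[of z "pp gam - 1"] by simp

lemma G_pos: "X \<ge> 0 \<Longrightarrow> z \<ge> 1 \<Longrightarrow> GG gam U z X > 0"
  using GB phi_pos by (meson less_le_trans)

lemma G_le: "X \<ge> 0 \<Longrightarrow> z \<ge> 1 \<Longrightarrow> GG gam U z X \<le> c2"
proof -
  assume a: "X \<ge> 0" "z \<ge> 1"
  have "GG gam U z X \<le> c2 * phi gam z X" using GB[OF a] by simp
  also have "\<dots> \<le> c2 * 1" using phi_le1[OF a] c2_ge by (intro mult_left_mono) auto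
  finally show ?thesis by simp
qed

lemma phi_ratio:
  assumes X: "X \<ge> 0" and z: "z \<ge> 1" "z' \<ge> 1" "z' \<le> 2 * z"
  shows "phi gam z X \<le> 2 * phi gam z' X"
proof -
  define e where "e = pp gam - 1"
  have e: "e \<le> 0" "e \<ge> -1" using pp_bounds[OF g1 g2] e_def by auto
  have "(2 * z) powr e \<le> z' powr e" using z e by (intro powr_mono2') auto
  moreover have "(2 * z) powr e = 2 powr e * z powr e" using z by (simp add: powr_mult)
  moreover have "2 powr e \<ge> 1/2"
  proof -
    have "2 powr e \<ge> 2 powr (-1)" using e by (intro powr_mono) auto
    then show ?thesis by (simp add: powr_minus)
  qed
  moreover have "z powr e > 0" using z by simp
  ultimately have h: "(1/2) * z powr e \<le> z' powr e"
    using mult_right_mono[of "1/2" "2 powr e" "z powr e"] by linarith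
  have A: "z powr e \<le> 2 * z' powr e" using h by linarith
  have R: "(1 + X) powr (gam - 1) \<le> 2 * (1 + X) powr (gam - 1)" using X by simp
  show ?thesis unfolding phi_def e_def[symmetric] using A R by linarith
qed

lemma G_ratio:
  assumes X: "X \<ge> 0" and z: "z \<ge> 1" "z' \<ge> 1" "z' \<le> 2 * z"
  shows "GG gam U z X \<le> (2 * c2) * GG gam U z' X"
proof -
  have "GG gam U z X \<le> c2 * phi gam z X" using GB[OF X z(1)] by simp
  also have "\<dots> \<le> c2 * (2 * phi gam z' X)" using phi_ratio[OF X z] c2_ge by (intro mult_left_mono) auto
  also have "\<dots> \<le> c2 * (2 * GG gam U z' X)" using GB[OF X z(2)] c2_ge by (intro mult_left_mono) auto
  finally show ?thesis by simp
qed

lemma lnG_diff: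
  assumes X: "X \<ge> 0" and z: "z \<ge> 1" "z' \<ge> 1" "z' \<le> 2 * z" "z \<le> 2 * z'"
  shows "\<bar>ln (GG gam U z X) - ln (GG gam U z' X)\<bar> \<le> ln (2 * c2)"
proof -
  have p1: "GG gam U z X > 0" "GG gam U z' X > 0" using G_pos X z by auto
  have c: "2 * c2 > 0" using c2_ge by simp
  have "ln (GG gam U z X) \<le> ln ((2 * c2) * GG gam U z' X)"
    using G_ratio[OF X z(1,2,3)] p1 c by simp
  moreover have "ln (GG gam U z' X) \<le> ln ((2 * c2) * GG gam U z X)"
    using G_ratio[OF X z(2,1,4)] p1 c by simp
  ultimately show ?thesis using p1 c by (simp add: ln_mult abs_le_iff)
qed

lemma G_cross:
  assumes Xv: "Xv \<ge> 0" and Xw: "Xw \<ge> 0" and l: "l \<ge> 1"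
  shows "GG gam U l Xv \<le> (c2 * (1 + Xw) powr (1 - gam)) * GG gam U l Xw"
proof -
  define A where "A = l powr (pp gam - 1)"
  define R where "R = (1 + Xw) powr (gam - 1)"
  have A: "0 < A" "A \<le> 1" unfolding A_def using pp_bounds[OF g1 g2] powr_le1_neg[OF l] l by auto
  have R: "0 < R" "R \<le> 1" unfolding R_def using g2 powr_le1_neg[of "1 + Xw" "gam - 1"] Xw by auto
  have inv: "(1 + Xw) powr (1 - gam) * R = 1" unfolding R_def using Xw
    by (simp add: powr_add[symmetric])
  have "GG gam U l Xv \<le> c2 * phi gam l Xv" using GB[OF Xv l] by simp
  also have "\<dots> \<le> c2 * A" unfolding phi_def A_def using c2_ge by (intro mult_left_mono) auto
  also have "A = (1 + Xw) powr (1 - gam) * (A * R)" using inv by (simp add: algebra_simps)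
  also have "A * R \<le> phi gam l Xw"
  proof -
    have "A * R \<le> A" using A R by (simp add: mult_left_le)
    moreover have "A * R \<le> R" using A R by (simp add: mult_left_le_one_le)
    ultimately show ?thesis unfolding phi_def A_def[symmetric] R_def[symmetric] by simp
  qed
  then have "c2 * ((1 + Xw) powr (1 - gam) * (A * R)) \<le> c2 * ((1 + Xw) powr (1 - gam) * phi gam l Xw)"
    using c2_ge Xw by (intro mult_left_mono) auto
  also have "\<dots> \<le> c2 * ((1 + Xw) powr (1 - gam) * GG gam U l Xw)"
    using GB[OF Xw l] c2_ge Xw by (intro mult_left_mono) auto
  finally show ?thesis by (simp add: algebra_simps)
qed

lemma lnG_cross:
  assumes Xv: "Xv \<ge> 0" and Xw: "Xw \<ge> 0" and l: "l \<ge> 1"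
  shows "\<bar>ln (GG gam U l Xv) - ln (GG gam U l Xw)\<bar> \<le> ln c2 + 4 * (Xv + Xw)"
proof -
  have p: "GG gam U l Xv > 0" "GG gam U l Xw > 0" using G_pos Xv Xw l by auto
  have c: "c2 > 0" using c2_ge by simp
  have lnb: "ln ((1 + X) powr (1 - gam)) \<le> 4 * X" if "X \<ge> 0" for X
  proof -
    have "ln ((1 + X) powr (1 - gam)) = (1 - gam) * ln (1 + X)" using that by (simp add: ln_powr)
    also have "\<dots> \<le> 4 * X"
      by (rule mult_mono) (use g1 g2 that ln_add_one_self_le_self[OF that] in auto)
    finally show ?thesis .
  qed
  have "ln (GG gam U l Xv) \<le> ln ((c2 * (1 + Xw) powr (1 - gam)) * GG gam U l Xw)"
    using G_cross[OF Xv Xw l] p c Xw by simp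
  also have "\<dots> = ln c2 + ln ((1 + Xw) powr (1 - gam)) + ln (GG gam U l Xw)"
    using p c Xw by (simp add: ln_mult)
  finally have 1: "ln (GG gam U l Xv) - ln (GG gam U l Xw) \<le> ln c2 + 4 * Xw" using lnb[OF Xw] by simp
  have "ln (GG gam U l Xw) \<le> ln ((c2 * (1 + Xv) powr (1 - gam)) * GG gam U l Xv)"
    using G_cross[OF Xw Xv l] p c Xv by simp
  also have "\<dots> = ln c2 + ln ((1 + Xv) powr (1 - gam)) + ln (GG gam U l Xv)"
    using p c Xv by (simp add: ln_mult)
  finally have 2: "ln (GG gam U l Xw) - ln (GG gam U l Xv) \<le> ln c2 + 4 * Xv" using lnb[OF Xv] by simp
  show ?thesis using 1 2 Xv Xw by (simp add: abs_le_iff)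
qed

lemma S_lip:
  assumes X: "X \<ge> 0" and z: "1 \<le> z" "z \<le> z'"
  shows "\<bar>SS gam U z' X - SS gam U z X\<bar> \<le> c2 * (z' - z)"
proof (cases "z = z'")
  case True then show ?thesis by simp
next
  case False
  then have lt: "z < z'" using z by simp
  have "\<And>y. z \<le> y \<Longrightarrow> y \<le> z' \<Longrightarrow> ((\<lambda>z. SS gam U z X) has_real_derivative GG gam U y X) (at y)"
    using SS_deriv[OF U X] z by auto
  from MVT2[OF lt this] obtain y where y: "z < y" "y < z'"
    "SS gam U z' X - SS gam U z X = (z' - z) * GG gam U y X" by blast
  have "0 < GG gam U y X" "GG gam U y X \<le> c2" using G_pos[OF X] G_le[OF X] y z by auto
  then have "\<bar>(z' - z) * GG gam U y X\<bar> \<le> c2 * (z' - z)"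
    using lt by (simp add: abs_mult mult_right_mono mult.commute)
  then show ?thesis using y(3) by simp
qed

lemma S_nonneg:
  assumes X: "X \<ge> 0" and z: "z \<ge> 0"
  shows "SS gam U z X \<ge> 0"
proof -
  have a: "(1 + X) powr (3 - gam) > 0" "(1 + X) powr (1 - gam) > 0" using X by auto
  have s: "z / (1 + X) powr (3 - gam) \<ge> 0" using a z by simp
  have u: "0 \<le> U (z / (1 + X) powr (3 - gam))" "U (z / (1 + X) powr (3 - gam)) \<le> 1"
    using cutoff_D(2)[OF U s] by auto
  show ?thesis unfolding Sg_def using u a z by (auto intro!: add_nonneg_nonneg mult_nonneg_nonneg)
qed

lemma S_l_bound:
  assumes X: "X \<ge> 0" and l: "l \<ge> 1"
  shows "SS gam U l X \<le> 6 * l + 3 * X^2"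
proof -
  define u where "u = U (l / (1 + X) powr (3 - gam))"
  have a: "(1 + X) powr (3 - gam) > 0" "(1 + X) powr (1 - gam) \<ge> 1" using X g2 by (auto intro: ge_one_powr_ge_zero)
  have s: "l / (1 + X) powr (3 - gam) \<ge> 0" using a l by simp
  have u: "0 \<le> u" "u \<le> 1" using cutoff_D(2)[OF U s] u_def by auto
  have lp: "l powr (pp gam) \<le> l" using pp_bounds[OF g1 g2] l powr_mono[of "pp gam" 1 l] by simp
  have lb: "l / (1 + X) powr (1 - gam) \<le> l" using a l by (simp add: divide_le_eq mult_le_cancel_left1)
  have "SS gam U l X = 5 * l powr (pp gam) * (1 - u) + (l / (1 + X) powr (1 - gam) + 3 * X^2) * u"
    unfolding Sg_def u_def ..
  also have "\<dots> \<le> 5 * l * (1 - u) + (l + 3 * X^2) * u"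
    using lp lb u by (intro add_mono mult_right_mono) auto
  also have "\<dots> \<le> 6 * l + 3 * X^2"
  proof -
    have 1: "l * u \<ge> 0" using u l by simp
    have 2: "X^2 * u \<le> X^2" using u by (simp add: mult_left_le)
    have "5 * l * (1 - u) + (l + 3 * X^2) * u = 5 * l - 4 * (l * u) + 3 * (X^2 * u)" by (simp add: algebra_simps)
    then show ?thesis using 1 2 l by linarith
  qed
  finally show ?thesis .
qed

end


lemma int_abs_bound:
  fixes f g :: "'a \<Rightarrow> real"
  assumes g: "integrable M g" and b: "AE x in M. \<bar>f x\<bar> \<le> g x"
  shows "\<bar>integral\<^sup>L M f\<bar> \<le> integral\<^sup>L M g"
proof (cases "integrable M f")
  case True
  have "\<bar>integral\<^sup>L M f\<bar> \<le> integral\<^sup>L M (\<lambda>x. \<bar>f x\<bar>)" by (rule integral_abs_bound)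
  also have "\<dots> \<le> integral\<^sup>L M g" using True g b by (intro integral_mono_AE) auto
  finally show ?thesis .
next
  case False
  then have "integral\<^sup>L M f = 0" by (rule not_integrable_integral_eq)
  moreover have "integral\<^sup>L M g \<ge> 0" using b by (intro integral_nonneg_AE) (auto elim: eventually_mono)
  ultimately show ?thesis by simp
qed

lemma set_int_abs_bound:
  fixes f g :: "'a \<Rightarrow> real"
  assumes g: "set_integrable M A g" and b: "AE x in M. x \<in> A \<longrightarrow> \<bar>f x\<bar> \<le> g x"
  shows "\<bar>(LINT x:A|M. f x)\<bar> \<le> (LINT x:A|M. g x)"
  unfolding set_lebesgue_integral_def
proof (rule int_abs_bound)
  show "integrable M (\<lambda>x. indicator A x *\<^sub>R g x)" using g unfolding set_integrable_def .
  show "AE x in M. \<bar>indicator A x *\<^sub>R f x\<bar> \<le> indicator A x *\<^sub>R g x"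
    using b by eventually_elim (auto split: split_indicator)
qed

lemma int_exp_inc:
  fixes a s t c :: real
  assumes a: "a \<ge> 0" and st: "s \<le> t" and tc: "t \<le> c"
  shows "set_integrable lborel {s..t} (\<lambda>y. a * exp (a * (y - c)))"
    and "(LINT y:{s..t}|lborel. a * exp (a * (y - c))) \<le> 1"
proof -
  have cont: "continuous_on {s..t} (\<lambda>y. a * exp (a * (y - c)))" by (intro continuous_intros)
  show "set_integrable lborel {s..t} (\<lambda>y. a * exp (a * (y - c)))"
    by (rule borel_integrable_atLeastAtMost'[OF cont])
  have "(LINT y:{s..t}|lborel. a * exp (a * (y - c))) = exp (a * (t - c)) - exp (a * (s - c))"
    unfolding set_lebesgue_integral_def
  proof (rule integral_FTC_atLeastAtMost[OF st _ cont])
    fix y assume "s \<le> y" "y \<le> t"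
    have "((\<lambda>y. exp (a * (y - c))) has_real_derivative exp (a * (y - c)) * (a * (1 - 0))) (at y)"
      by (intro derivative_eq_intros) auto
    then show "((\<lambda>y. exp (a * (y - c))) has_vector_derivative a * exp (a * (y - c))) (at y within {s..t})"
      by (simp add: has_real_derivative_iff_has_vector_derivative[symmetric] has_field_derivative_at_within mult.commute)
  qed
  also have "\<dots> \<le> exp (a * (t - c))" by simp
  also have "\<dots> \<le> 1" using a tc by (simp add: mult_nonneg_nonpos)
  finally show "(LINT y:{s..t}|lborel. a * exp (a * (y - c))) \<le> 1" .
qed

lemma int_exp_dec:
  fixes a s t c :: real
  assumes a: "a \<ge> 0" and st: "s \<le> t" and cs: "c \<le> s"
  shows "set_integrable lborel {s..t} (\<lambda>y. a * exp (- (a * (y - c))))"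
    and "(LINT y:{s..t}|lborel. a * exp (- (a * (y - c)))) \<le> 1"
proof -
  have cont: "continuous_on {s..t} (\<lambda>y. a * exp (- (a * (y - c))))" by (intro continuous_intros)
  show "set_integrable lborel {s..t} (\<lambda>y. a * exp (- (a * (y - c))))"
    by (rule borel_integrable_atLeastAtMost'[OF cont])
  have "(LINT y:{s..t}|lborel. a * exp (- (a * (y - c)))) = (- exp (- (a * (t - c)))) - (- exp (- (a * (s - c))))"
    unfolding set_lebesgue_integral_def
  proof (rule integral_FTC_atLeastAtMost[OF st _ cont])
    fix y assume "s \<le> y" "y \<le> t"
    have "((\<lambda>y. - exp (- (a * (y - c)))) has_real_derivative - (exp (- (a * (y - c))) * (- (a * (1 - 0))))) (at y)"
      by (intro derivative_eq_intros) auto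
    then show "((\<lambda>y. - exp (- (a * (y - c)))) has_vector_derivative a * exp (- (a * (y - c)))) (at y within {s..t})"
      by (simp add: has_real_derivative_iff_has_vector_derivative[symmetric] has_field_derivative_at_within mult.commute)
  qed
  also have "\<dots> \<le> exp (- (a * (s - c)))" by simp
  also have "\<dots> \<le> 1" using a cs by simp
  finally show "(LINT y:{s..t}|lborel. a * exp (- (a * (y - c)))) \<le> 1" .
qed

lemma powr_ratio_exp:
  fixes a b e d :: real
  assumes "a > 0" "b > 0" "d > 0"
  shows "(d * a) powr e / (d * b) powr e = exp (e * (ln a - ln b))"
  using assms by (simp add: powr_def ln_mult exp_diff[symmetric] algebra_simps)


lemma R0_3: "(R0 v) $ 3 = - (v $ 3)"
  unfolding R0_def by simp

lemma norm_R0: fixes ub :: "real^3" assumes "ub $ 3 = 0" shows "norm (R0 v - ub) = norm (v - ub)"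
proof -
  have "\<bar>(R0 v - ub) $ i\<bar> = \<bar>(v - ub) $ i\<bar>" for i
    using assms unfolding R0_def by (cases "i = 3") auto
  then show ?thesis unfolding norm_vec_def by (simp add: real_norm_def)
qed

lemma sqrt_exp: "sqrt (exp y) = exp (y / 2)"
proof -
  have "exp y = (exp (y / 2))^2" by (simp add: power2_eq_square exp_add[symmetric])
  then show ?thesis by simp
qed

locale setting = cut U gam B for U gam B +
  fixes m hb delta l A rho T :: real and ub :: "real^3"
  assumes hb0: "0 < hb" and hb1: "hb \<le> 1" and d0: "0 < delta" and dA: "delta * A * c2 \<le> 1"
    and A0: "A > 0" and l1: "l \<ge> 1" and rho: "rho > 0" and T: "T > 0" and ub3: "ub $ 3 = 0"
begin

abbreviation "k \<equiv> kappa m hb gam U delta l rho T ub"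
abbreviation "nu \<equiv> nuf gam rho T ub"
definition "EK = \<bar>m\<bar> * ln (2 * c2) + 2"

lemma nu_pos': "nu v > 0" using nu_pos[OF g1 g2 rho T] .

lemma z_facts:
  assumes "0 \<le> x" "x \<le> A"
  shows "1 \<le> delta * x + l" "delta * x + l \<le> 2 * l" "l \<le> 2 * (delta * x + l)" "c2 * (delta * x + l - l) \<le> 1"
proof -
  have "delta * x \<le> delta * A" using assms d0 by (simp add: mult_left_mono)
  moreover have "delta * A * c2 \<le> 1" using dA .
  moreover have "delta * A \<ge> 0" using d0 A0 by simp
  moreover have "c2 \<ge> 7" using c2_ge .
  moreover have "delta * x \<ge> 0" using assms d0 by simp
  ultimately have dA1: "delta * A \<le> 1"
    using mult_left_mono[of 1 c2 "delta * A"] by simp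
  have dx: "delta * x \<le> 1" using \<open>delta * x \<le> delta * A\<close> dA1 by linarith
  have "c2 * (delta * x) \<le> c2 * (delta * A)" using mult_left_mono[OF \<open>delta * x \<le> delta * A\<close>, of c2] c2_ge by linarith
  then have dx2: "c2 * (delta * x) \<le> 1" using dA by (simp add: algebra_simps)
  show "1 \<le> delta * x + l" using l1 \<open>delta * x \<ge> 0\<close> by simp
  show "delta * x + l \<le> 2 * l" using dx l1 by linarith
  show "l \<le> 2 * (delta * x + l)" using \<open>delta * x \<ge> 0\<close> l1 by simp
  show "c2 * (delta * x + l - l) \<le> 1" using dx2 by simp
qed

lemma kap_cf:
  assumes "0 \<le> x"
  shows "k x v = - (m / 2) * (ln (GG gam U (delta * x + l) (norm (v - ub))) - ln (GG gam U l (norm (v - ub))))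
    - hb * (SS gam U (delta * x + l) (norm (v - ub)) - SS gam U l (norm (v - ub)))
    + x * (nu v / v $ 3)"
  using kappa_eq[OF U g1 g2 d0 l1 assms] .

lemma piece_bound:
  assumes "0 \<le> x" "x \<le> A" and that: "X \<ge> 0"
  shows "\<bar>(m / 2) * (ln (GG gam U (delta * x + l) X) - ln (GG gam U l X))\<bar> \<le> \<bar>m\<bar> / 2 * ln (2 * c2)"
    and "\<bar>hb * (SS gam U (delta * x + l) X - SS gam U l X)\<bar> \<le> 1"
proof -
  note z = z_facts[OF assms(1,2)]
  have "\<bar>ln (GG gam U (delta * x + l) X) - ln (GG gam U l X)\<bar> \<le> ln (2 * c2)"
    using lnG_diff[OF that z(1) l1 z(3) z(2)] .
  then show "\<bar>(m / 2) * (ln (GG gam U (delta * x + l) X) - ln (GG gam U l X))\<bar> \<le> \<bar>m\<bar> / 2 * ln (2 * c2)"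
    by (simp add: abs_mult mult_left_mono)
  have lx: "l \<le> delta * x + l" using assms d0 by simp
  have "\<bar>SS gam U (delta * x + l) X - SS gam U l X\<bar> \<le> c2 * (delta * x + l - l)"
    using S_lip[OF that l1 lx] .
  also have "\<dots> \<le> 1" using z(4) .
  finally have "\<bar>SS gam U (delta * x + l) X - SS gam U l X\<bar> \<le> 1" .
  then have "hb * \<bar>SS gam U (delta * x + l) X - SS gam U l X\<bar> \<le> hb * 1" using hb0 by (intro mult_left_mono) auto
  then have "hb * \<bar>SS gam U (delta * x + l) X - SS gam U l X\<bar> \<le> 1" using hb1 by linarith
  then show "\<bar>hb * (SS gam U (delta * x + l) X - SS gam U l X)\<bar> \<le> 1" using hb0 hb1 by (simp add: abs_mult)
qed

lemma KD:
  assumes x: "0 \<le> x" "x \<le> A" and x': "0 \<le> x'" "x' \<le> A"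
  shows "- (k x v - k x' w) \<le> EK - x * (nu v / v $ 3) + x' * (nu w / w $ 3)"
proof -
  define P1 where "P1 = (m / 2) * (ln (GG gam U (delta * x + l) (norm (v - ub))) - ln (GG gam U l (norm (v - ub))))"
  define P2 where "P2 = hb * (SS gam U (delta * x + l) (norm (v - ub)) - SS gam U l (norm (v - ub)))"
  define Q1 where "Q1 = (m / 2) * (ln (GG gam U (delta * x' + l) (norm (w - ub))) - ln (GG gam U l (norm (w - ub))))"
  define Q2 where "Q2 = hb * (SS gam U (delta * x' + l) (norm (w - ub)) - SS gam U l (norm (w - ub)))"
  have e: "- (k x v - k x' w) = P1 + P2 - x * (nu v / v $ 3) - Q1 - Q2 + x' * (nu w / w $ 3)"
    unfolding kap_cf[OF x(1)] kap_cf[OF x'(1)] P1_def P2_def Q1_def Q2_def by (simp add: algebra_simps)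
  have "\<bar>P1\<bar> \<le> \<bar>m\<bar> / 2 * ln (2 * c2)" "\<bar>P2\<bar> \<le> 1" unfolding P1_def P2_def
    using piece_bound[OF x] by auto
  moreover have "\<bar>Q1\<bar> \<le> \<bar>m\<bar> / 2 * ln (2 * c2)" "\<bar>Q2\<bar> \<le> 1" unfolding Q1_def Q2_def
    using piece_bound[OF x'] by auto
  ultimately have "P1 \<le> \<bar>m\<bar> / 2 * ln (2 * c2)" "P2 \<le> 1" "- Q1 \<le> \<bar>m\<bar> / 2 * ln (2 * c2)" "- Q2 \<le> 1"
    by (auto dest: abs_le_D1 abs_le_D2)
  then show ?thesis unfolding e EK_def by linarith
qed

lemma expKD:
  assumes x: "0 \<le> x" "x \<le> A" and x': "0 \<le> x'" "x' \<le> A"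
  shows "exp (- (k x v - k x' w)) \<le> exp EK * exp (- x * (nu v / v $ 3)) * exp (x' * (nu w / w $ 3))"
proof -
  have "exp (- (k x v - k x' w)) \<le> exp (EK - x * (nu v / v $ 3) + x' * (nu w / w $ 3))"
    using KD[OF x x'] by simp
  also have "\<dots> = exp EK * exp (- x * (nu v / v $ 3)) * exp (x' * (nu w / w $ 3))"
    by (simp only: exp_add[symmetric]) (simp add: algebra_simps)
  finally show ?thesis .
qed

end


lemma prod_bound:
  fixes A A' B C C' :: real
  assumes "0 \<le> A" "A \<le> A'" "0 \<le> B" "\<bar>C\<bar> \<le> C'"
  shows "\<bar>A * B * C\<bar> \<le> A' * B * C'"
proof -
  have "\<bar>A * B * C\<bar> = A * B * \<bar>C\<bar>" using assms by (simp add: abs_mult)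
  also have "\<dots> \<le> A' * B * C'"
    using assms by (intro mult_mono mult_right_mono) auto
  finally show ?thesis .
qed

lemma exp_comb: fixes E x a x' :: real shows "exp E * exp (- x * a) * exp (x' * a) = exp E * exp (a * (x' - x))"
proof -
  have "exp (- x * a) * exp (x' * a) = exp (- x * a + x' * a)" by (rule exp_add[symmetric])
  also have "- x * a + x' * a = a * (x' - x)" by (simp add: algebra_simps)
  finally show ?thesis by (simp add: mult.assoc)
qed

context setting
begin

lemma fK:
  assumes K: "\<forall>x\<in>{0<..<A}. \<forall>v. \<bar>f x v / nu v\<bar> \<le> K" and x: "x \<in> {0<..<A}"
  shows "\<bar>f x v\<bar> \<le> K * nu v" and "K \<ge> 0"
proof -
  have n: "nu v > 0" by (rule nu_pos')
  have "\<bar>f x v / nu v\<bar> \<le> K" using K x by blast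
  then have "\<bar>f x v\<bar> / nu v \<le> K" using n by (simp add: abs_div)
  then show "\<bar>f x v\<bar> \<le> K * nu v" using n by (simp add: divide_le_eq)
  show "K \<ge> 0" using K x by (meson abs_ge_zero order_trans)
qed

lemma U_bound:
  assumes K: "\<forall>x\<in>{0<..<A}. \<forall>v. \<bar>f x v / nu v\<bar> \<le> K" and x: "x \<in> {0<..<A}"
  shows "\<bar>Uop m hb gam U delta l rho T ub A f x v\<bar> \<le> exp EK * K"
proof -
  have K0: "K \<ge> 0" using fK[OF K x] by simp
  have n: "nu v > 0" by (rule nu_pos')
  consider "v $ 3 > 0" | "v $ 3 < 0" | "v $ 3 = 0" by linarith
  then show ?thesis
  proof cases
    case 1
    define a where "a = nu v / v $ 3"
    have a0: "a \<ge> 0" unfolding a_def using n 1 by simp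
    have I: "\<bar>LINT x':{0..x}|lborel. exp (- (k x v - k x' v)) * (1 / v $ 3) * f x' v\<bar>
        \<le> (LINT x':{0..x}|lborel. exp EK * K * (a * exp (a * (x' - x))))"
    proof (rule set_int_abs_bound)
      show "set_integrable lborel {0..x} (\<lambda>x'. exp EK * K * (a * exp (a * (x' - x))))"
        using int_exp_inc(1)[OF a0, of 0 x x] x by auto
      have "AE x' in lborel. x' \<noteq> 0" by (rule AE_lborel_singleton)
      then show "AE x' in lborel. x' \<in> {0..x} \<longrightarrow> \<bar>exp (- (k x v - k x' v)) * (1 / v $ 3) * f x' v\<bar>
          \<le> exp EK * K * (a * exp (a * (x' - x)))"
      proof eventually_elim
        case (elim x')
        show ?case
        proof
          assume x': "x' \<in> {0..x}"
          then have x'A: "x' \<in> {0<..<A}" using elim x by auto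
          have "\<bar>exp (- (k x v - k x' v)) * (1 / v $ 3) * f x' v\<bar>
              \<le> (exp EK * exp (- x * (nu v / v $ 3)) * exp (x' * (nu v / v $ 3))) * (1 / v $ 3) * (K * nu v)"
            using expKD[of x x' v v] x x' fK(1)[OF K x'A] 1
            by (intro prod_bound) auto
          also have "\<dots> = exp EK * K * (a * exp (a * (x' - x)))"
            unfolding exp_comb a_def by (simp add: algebra_simps)
          finally show "\<bar>exp (- (k x v - k x' v)) * (1 / v $ 3) * f x' v\<bar> \<le> exp EK * K * (a * exp (a * (x' - x)))" .
        qed
      qed
    qed
    also have "\<dots> = exp EK * K * (LINT x':{0..x}|lborel. a * exp (a * (x' - x)))" by simp
    also have "\<dots> \<le> exp EK * K * 1"
      using int_exp_inc(2)[OF a0, of 0 x x] x K0 by (intro mult_left_mono) auto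
    finally show ?thesis unfolding Uop_def Let_def using 1 by simp
  next
    case 2
    define a where "a = nu v / (- v $ 3)"
    have a0: "a \<ge> 0" unfolding a_def using n 2 by (intro divide_nonneg_pos) auto
    have I: "\<bar>LINT x':{x..A}|lborel. exp (- (k x v - k x' v)) * (1 / v $ 3) * f x' v\<bar>
        \<le> (LINT x':{x..A}|lborel. exp EK * K * (a * exp (- (a * (x' - x)))))"
    proof (rule set_int_abs_bound)
      show "set_integrable lborel {x..A} (\<lambda>x'. exp EK * K * (a * exp (- (a * (x' - x)))))"
        using int_exp_dec(1)[OF a0, of x A x] x by auto
      have "AE x' in lborel. x' \<noteq> A" by (rule AE_lborel_singleton)
      then show "AE x' in lborel. x' \<in> {x..A} \<longrightarrow> \<bar>exp (- (k x v - k x' v)) * (1 / v $ 3) * f x' v\<bar>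
          \<le> exp EK * K * (a * exp (- (a * (x' - x))))"
      proof eventually_elim
        case (elim x')
        show ?case
        proof
          assume x': "x' \<in> {x..A}"
          then have x'A: "x' \<in> {0<..<A}" using elim x by auto
          have "\<bar>exp (- (k x v - k x' v)) * (1 / v $ 3) * f x' v\<bar> = 
              \<bar>exp (- (k x v - k x' v)) * (1 / (- v $ 3)) * f x' v\<bar>" by (simp add: abs_mult)
          also have "\<dots> \<le> (exp EK * exp (- x * (nu v / v $ 3)) * exp (x' * (nu v / v $ 3))) * (1 / (- v $ 3)) * (K * nu v)"
            using expKD[of x x' v v] x x' fK(1)[OF K x'A] 2
            by (intro prod_bound) auto
          also have "\<dots> = exp EK * K * (a * exp (- (a * (x' - x))))"
            unfolding exp_comb a_def by (simp add: algebra_simps)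
          finally show "\<bar>exp (- (k x v - k x' v)) * (1 / v $ 3) * f x' v\<bar> \<le> exp EK * K * (a * exp (- (a * (x' - x))))" .
        qed
      qed
    qed
    also have "\<dots> = exp EK * K * (LINT x':{x..A}|lborel. a * exp (- (a * (x' - x))))" by simp
    also have "\<dots> \<le> exp EK * K * 1"
      using int_exp_dec(2)[OF a0, of x A x] x K0 by (intro mult_left_mono) auto
    finally show ?thesis unfolding Uop_def Let_def using 2 by simp
  next
    case 3
    then show ?thesis unfolding Uop_def Let_def using K0 by simp
  qed
qed

end


lemma abs_mult_le:
  fixes a b c d :: real
  assumes "\<bar>a\<bar> \<le> c" "\<bar>b\<bar> \<le> d" shows "\<bar>a * b\<bar> \<le> c * d"
  using assms by (simp add: abs_mult mult_mono')

locale wsetting = setting U gam B m hb delta l A rho T ub for U gam B m hb delta l A rho T ub +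
  fixes Tw alpha :: real and uw :: "real^3"
  assumes Tw0: "0 < Tw" and Tw2: "Tw < 2 * T" and al0: "0 \<le> alpha" and al1: "alpha \<le> 1"
    and hbl: "hb \<le> 1 / (6 * l)" and hba: "hb \<le> (1 / (2 * Tw) - 1 / (4 * T)) / 6"
begin

definition "M0 = rho / (2 * pi * T) powr (3/2)"
definition "sM = sqrt M0"
definition "cW = sqrt (2 * pi / Tw) * (2 * pi * Tw) powr (-3/2)"
definition "aa = 1 / (2 * Tw) - 1 / (4 * T)"
definition "bb = 2 * \<bar>m\<bar> + norm (ub - uw) / Tw"
abbreviation "Ms \<equiv> Msig hb gam U delta l rho T ub"

lemma M0_pos: "M0 > 0" unfolding M0_def using rho T by simp
lemma sM_pos: "sM > 0" unfolding sM_def using M0_pos by simp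
lemma aa_pos: "aa > 0" unfolding aa_def using Tw0 Tw2 T by (simp add: field_simps)

lemma sig0: "sigmaf gam U delta l ub 0 w = SS gam U l (norm (w - ub))"
  unfolding sig_eq by simp

lemma sqrtMs: "sqrt (Ms w) = sM * exp (- ((norm (w - ub))^2) / (4 * T)) * exp (- hb * SS gam U l (norm (w - ub)))"
proof -
  have "Ms w = M0 * exp (- ((norm (w - ub))^2) / (2 * T)) * exp (- 2 * hb * SS gam U l (norm (w - ub)))"
    unfolding Msig_def Maxw_def M0_def sig0 by simp
  then have "sqrt (Ms w) = sqrt M0 * sqrt (exp (- ((norm (w - ub))^2) / (2 * T))) * sqrt (exp (- 2 * hb * SS gam U l (norm (w - ub))))"
    by (simp add: real_sqrt_mult)
  also have "\<dots> = sM * exp (- ((norm (w - ub))^2) / (4 * T)) * exp (- hb * SS gam U l (norm (w - ub)))"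
    unfolding sqrt_exp sM_def by simp
  finally show ?thesis .
qed

lemma sqrtMs_le: "sqrt (Ms w) \<le> sM * exp (- ((norm (w - ub))^2) / (4 * T))"
proof -
  have "SS gam U l (norm (w - ub)) \<ge> 0" using S_nonneg l1 by simp
  then have "exp (- hb * SS gam U l (norm (w - ub))) \<le> 1" using hb0 by (simp add: mult_nonneg_nonneg)
  then show ?thesis unfolding sqrtMs using sM_pos by (simp add: mult_left_le)
qed

lemma sqrtMs_pos: "sqrt (Ms w) > 0" unfolding sqrtMs using sM_pos by simp

lemma Wpref: "Mwall Tw uw v / sqrt (Ms v) * exp (2 * \<bar>m\<bar> * norm (v - ub)) \<le> cW / sM * exp (1 + bb^2 / (2 * aa))"
proof -
  define X where "X = norm (v - ub)"
  define d where "d = norm (ub - uw)"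
  have X0: "X \<ge> 0" "d \<ge> 0" unfolding X_def d_def by auto
  have S: "hb * SS gam U l X \<le> 1 + (aa / 2) * X^2"
  proof -
    have "hb * SS gam U l X \<le> hb * (6 * l + 3 * X^2)" using S_l_bound[OF X0(1) l1] hb0 by (intro mult_left_mono) auto
    also have "\<dots> = hb * (6 * l) + (3 * hb) * X^2" by (simp add: algebra_simps)
    also have "hb * (6 * l) \<le> 1" using hbl l1 by (simp add: field_simps)
    also have "(3 * hb) * X^2 \<le> (aa / 2) * X^2" using hba aa_def by (intro mult_right_mono) auto
    finally show ?thesis by simp
  qed
  have D: "norm (v - uw)^2 \<ge> X^2 - 2 * d * X"
  proof -
    have "X \<le> norm (v - uw) + d" unfolding X_def d_def using norm_triangle_ineq[of "v - uw" "uw - ub"]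
      by (simp add: norm_minus_commute)
    then show ?thesis
    proof (cases "X \<le> d")
      case True then have "X^2 - 2 * d * X \<le> 0" using X0 by (simp add: power2_eq_square mult_right_mono)
      then show ?thesis by (smt (verit) zero_le_power2)
    next
      case False
      then have "X - d \<le> norm (v - uw)" "0 \<le> X - d" using \<open>X \<le> norm (v - uw) + d\<close> by auto
      then have "(X - d)^2 \<le> norm (v - uw)^2" by (simp add: power_mono)
      moreover have "(X - d)^2 \<ge> X^2 - 2 * d * X" by (simp add: power2_eq_square algebra_simps)
      ultimately show ?thesis by linarith
    qed
  qed
  have Tw': "1 / (2 * Tw) > 0" using Tw0 by simp
  have E: "X^2 / (4 * T) + hb * SS gam U l X - norm (v - uw)^2 / (2 * Tw) + 2 * \<bar>m\<bar> * X \<le> 1 + bb^2 / (2 * aa)"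
  proof -
    have "- (norm (v - uw)^2 / (2 * Tw)) \<le> - ((X^2 - 2 * d * X) / (2 * Tw))"
      using D Tw0 by (simp add: divide_right_mono)
    then have "X^2 / (4 * T) + hb * SS gam U l X - norm (v - uw)^2 / (2 * Tw) + 2 * \<bar>m\<bar> * X
       \<le> X^2 / (4 * T) + (1 + (aa / 2) * X^2) - (X^2 - 2 * d * X) / (2 * Tw) + 2 * \<bar>m\<bar> * X" using S by linarith
    also have "\<dots> = 1 + (bb * X - (aa / 2) * X^2)" unfolding aa_def bb_def d_def using Tw0 T
      by (simp add: field_simps power2_eq_square)
    also have "\<dots> \<le> 1 + bb^2 / (4 * (aa / 2))" using quad_le[of "aa / 2" bb X] aa_pos by simp
    finally show ?thesis by simp
  qed
  have "Mwall Tw uw v / sqrt (Ms v) * exp (2 * \<bar>m\<bar> * X)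
      = cW / sM * exp (X^2 / (4 * T) + hb * SS gam U l X - norm (v - uw)^2 / (2 * Tw) + 2 * \<bar>m\<bar> * X)"
    unfolding Mwall_def sqrtMs cW_def X_def[symmetric] using sM_pos
    by (simp add: exp_add[symmetric] exp_diff[symmetric] exp_minus field_simps)
  also have "\<dots> \<le> cW / sM * exp (1 + bb^2 / (2 * aa))"
    using E sM_pos unfolding cW_def using Tw0 by (intro mult_left_mono) auto
  finally show ?thesis unfolding X_def .
qed

end


context wsetting
begin

abbreviation "sx \<equiv> sigmax gam U delta l ub"
definition "RB v w = exp (\<bar>m\<bar> / 2 * ln c2) * exp (2 * \<bar>m\<bar> * norm (v - ub)) * exp (2 * \<bar>m\<bar> * norm (w - ub))"
definition "gW w = exp ((2 * \<bar>m\<bar> + 1) * norm (w - ub) - (1 / (4 * T)) * (norm (w - ub))^2)"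
definition "J = integral\<^sup>L lborel gW"
definition "Cw = cW / sM * exp (1 + bb^2 / (2 * aa)) * exp (\<bar>m\<bar> / 2 * ln c2) * exp EK * sM * J"

lemma gW_int: "integrable lborel gW"
proof -
  have "1 / (4 * T) > 0" using T by simp
  from gauss_integrable[OF this, where c = ub and b = "2 * \<bar>m\<bar> + 1"] show ?thesis
    unfolding gW_def by simp
qed

lemma J_nonneg: "J \<ge> 0" unfolding J_def gW_def by simp

lemma Cw_nonneg: "Cw \<ge> 0"
  unfolding Cw_def cW_def using sM_pos J_nonneg Tw0 by simp

lemma sx0: "sx 0 v = delta * GG gam U l (norm (v - ub))"
  using sigx_eq[OF U, of delta 0 l gam ub v] l1 by simp

lemma ratio_bd: "\<bar>sx 0 v powr (m / 2) / sx 0 w powr (m / 2)\<bar> \<le> RB v w"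
proof -
  define Gv where "Gv = GG gam U l (norm (v - ub))"
  define Gw where "Gw = GG gam U l (norm (w - ub))"
  have p: "Gv > 0" "Gw > 0" unfolding Gv_def Gw_def using G_pos l1 by auto
  have "sx 0 v powr (m / 2) / sx 0 w powr (m / 2) = exp ((m / 2) * (ln Gv - ln Gw))"
    unfolding sx0 Gv_def[symmetric] Gw_def[symmetric] using powr_ratio_exp[OF p d0] by simp
  moreover have "(m / 2) * (ln Gv - ln Gw) \<le> \<bar>m\<bar> / 2 * ln c2 + 2 * \<bar>m\<bar> * norm (v - ub) + 2 * \<bar>m\<bar> * norm (w - ub)"
  proof -
    have "(m / 2) * (ln Gv - ln Gw) \<le> \<bar>m\<bar> / 2 * \<bar>ln Gv - ln Gw\<bar>"
      by (simp add: abs_mult[symmetric] abs_ge_self)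
    also have "\<dots> \<le> \<bar>m\<bar> / 2 * (ln c2 + 4 * (norm (v - ub) + norm (w - ub)))"
      unfolding Gv_def Gw_def using lnG_cross[of "norm (v - ub)" "norm (w - ub)" l] l1
      by (intro mult_left_mono) auto
    finally show ?thesis by (simp add: algebra_simps)
  qed
  ultimately show ?thesis unfolding RB_def by (simp add: exp_add[symmetric])
qed

lemma w3_le: "\<bar>w $ 3\<bar> \<le> norm (w - ub)"
  using component_le_norm_cart[of "w - ub" 3] ub3 by simp

lemma WB:
  "RB v w * exp EK * K * (sM * exp (- ((norm (w - ub))^2) / (4 * T))) * \<bar>w $ 3\<bar>
     \<le> (exp (\<bar>m\<bar> / 2 * ln c2) * exp (2 * \<bar>m\<bar> * norm (v - ub)) * exp EK * K * sM) * gW w"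
  if K0: "K \<ge> 0"
proof -
  define X where "X = norm (w - ub)"
  have "\<bar>w $ 3\<bar> \<le> exp X" using w3_le[of w] exp_ge_add_one_self[of X] unfolding X_def by linarith
  then have "exp (2 * \<bar>m\<bar> * X) * exp (- (X^2) / (4 * T)) * \<bar>w $ 3\<bar>
      \<le> exp (2 * \<bar>m\<bar> * X) * exp (- (X^2) / (4 * T)) * exp X" by (intro mult_left_mono) auto
  also have "\<dots> = gW w" unfolding gW_def X_def[symmetric] by (simp add: exp_add[symmetric] algebra_simps)
  finally have h: "exp (2 * \<bar>m\<bar> * X) * exp (- (X^2) / (4 * T)) * \<bar>w $ 3\<bar> \<le> gW w" .
  have c: "exp (\<bar>m\<bar> / 2 * ln c2) * exp (2 * \<bar>m\<bar> * norm (v - ub)) * exp EK * K * sM \<ge> 0"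
    using K0 sM_pos by simp
  have "RB v w * exp EK * K * (sM * exp (- (X^2) / (4 * T))) * \<bar>w $ 3\<bar>
      = (exp (\<bar>m\<bar> / 2 * ln c2) * exp (2 * \<bar>m\<bar> * norm (v - ub)) * exp EK * K * sM)
        * (exp (2 * \<bar>m\<bar> * X) * exp (- (X^2) / (4 * T)) * \<bar>w $ 3\<bar>)"
    unfolding RB_def X_def by (simp add: algebra_simps)
  also have "\<dots> \<le> (exp (\<bar>m\<bar> / 2 * ln c2) * exp (2 * \<bar>m\<bar> * norm (v - ub)) * exp EK * K * sM) * gW w"
    using h c by (intro mult_left_mono) auto
  finally show ?thesis unfolding X_def .
qed

lemma wall_final:
  assumes K0: "K \<ge> 0" and I: "\<bar>I\<bar> \<le> (exp (\<bar>m\<bar> / 2 * ln c2) * exp (2 * \<bar>m\<bar> * norm (v - ub)) * exp EK * K * sM) * J"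
  shows "\<bar>alpha * Mwall Tw uw v / sqrt (Ms v) * I\<bar> \<le> alpha * Cw * K"
proof -
  have mw: "Mwall Tw uw v / sqrt (Ms v) \<ge> 0" unfolding Mwall_def using sqrtMs_pos[of v] Tw0
    by (intro divide_nonneg_pos mult_nonneg_nonneg) auto
  have mw1: "Mwall Tw uw v \<ge> 0" unfolding Mwall_def using Tw0 by simp
  have mw2: "sqrt (Ms v) > 0" by (rule sqrtMs_pos)
  have "\<bar>alpha * Mwall Tw uw v / sqrt (Ms v) * I\<bar> = alpha * (Mwall Tw uw v / sqrt (Ms v)) * \<bar>I\<bar>"
    using al0 mw mw1 mw2 by (simp add: abs_mult)
  also have "\<dots> \<le> alpha * (Mwall Tw uw v / sqrt (Ms v)) * ((exp (\<bar>m\<bar> / 2 * ln c2) * exp (2 * \<bar>m\<bar> * norm (v - ub)) * exp EK * K * sM) * J)"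
    using I al0 mw by (intro mult_left_mono mult_nonneg_nonneg) auto
  also have "\<dots> = alpha * ((Mwall Tw uw v / sqrt (Ms v) * exp (2 * \<bar>m\<bar> * norm (v - ub))) * (exp (\<bar>m\<bar> / 2 * ln c2) * exp EK * sM * J * K))"
    by (simp add: algebra_simps)
  also have "\<dots> \<le> alpha * ((cW / sM * exp (1 + bb^2 / (2 * aa))) * (exp (\<bar>m\<bar> / 2 * ln c2) * exp EK * sM * J * K))"
    using Wpref[of v] al0 K0 J_nonneg sM_pos by (intro mult_left_mono mult_right_mono) auto
  also have "\<dots> = alpha * Cw * K" unfolding Cw_def by (simp add: algebra_simps)
  finally show ?thesis .
qed

end


context wsetting
begin

definition "Qv v K = exp (\<bar>m\<bar> / 2 * ln c2) * exp (2 * \<bar>m\<bar> * norm (v - ub)) * exp EK * K * sM"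

lemma Qv_nonneg: "K \<ge> 0 \<Longrightarrow> Qv v K \<ge> 0" unfolding Qv_def using sM_pos by simp

lemma outer_bound:
  assumes K0: "K \<ge> 0" and pw: "\<And>w. w $ 3 < 0 \<Longrightarrow> \<bar>F w\<bar> \<le> Qv v K * gW w"
  shows "\<bar>(\<integral>w\<in>{w. w $ 3 < 0}. F w \<partial>lborel)\<bar> \<le> Qv v K * J"
proof -
  have "\<bar>(\<integral>w\<in>{w. w $ 3 < 0}. F w \<partial>lborel)\<bar> \<le> integral\<^sup>L lborel (\<lambda>w. Qv v K * gW w)"
    unfolding set_lebesgue_integral_def
  proof (rule int_abs_bound)
    show "integrable lborel (\<lambda>w. Qv v K * gW w)" using gW_int by simp
    show "AE w in lborel. \<bar>indicator {w. w $ 3 < 0} w *\<^sub>R F w\<bar> \<le> Qv v K * gW w"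
    proof (rule AE_I2)
      fix w :: "real^3"
      show "\<bar>indicator {w. w $ 3 < 0} w *\<^sub>R F w\<bar> \<le> Qv v K * gW w"
      proof (cases "w $ 3 < 0")
        case True then show ?thesis using pw by simp
      next
        case False then show ?thesis using Qv_nonneg[OF K0] by (simp add: gW_def)
      qed
    qed
  qed
  also have "\<dots> = Qv v K * J" unfolding J_def by simp
  finally show ?thesis .
qed

lemma exp_le1: "(x::real) \<le> 0 \<Longrightarrow> exp x \<le> 1" by simp

lemma Y_bound:
  assumes fA: "\<forall>v. \<bar>f A v\<bar> \<le> K" and x: "x \<in> {0<..<A}"
  shows "\<bar>YA m hb gam U delta l rho T ub Tw uw alpha A f x v\<bar> \<le> (exp EK + Cw) * K"
proof -
  have K0: "K \<ge> 0" using fA by (meson abs_ge_zero order_trans)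
  have x0: "0 \<le> x" "x \<le> A" using x by auto
  have A0': "0 \<le> A" "A \<le> A" using A0 by auto
  consider "v $ 3 > 0" | "v $ 3 < 0" | "v $ 3 = 0" by linarith
  then show ?thesis
  proof cases
    case 1
    define T1 where "T1 = (1 - alpha) * exp (k A (R0 v) - k x v) * f A (R0 v)"
    define IY where "IY = (\<integral>w\<in>{w. w $ 3 < 0}. (- w $ 3) * (sx 0 v powr (m / 2) / sx 0 w powr (m / 2))
                 * exp (k A w - k x v) * f A w * sqrt (Ms w) \<partial>lborel)"
    have Y: "YA m hb gam U delta l rho T ub Tw uw alpha A f x v = T1 + alpha * Mwall Tw uw v / sqrt (Ms v) * IY"
      unfolding YA_def Let_def T1_def IY_def using 1 by simp
    have n1: "nu v > 0" "nu (R0 v) > 0" using nu_pos' by auto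
    have e1: "exp (k A (R0 v) - k x v) \<le> exp EK"
    proof -
      have "exp (k A (R0 v) - k x v) = exp (- (k x v - k A (R0 v)))" by simp
      also have "\<dots> \<le> exp EK * exp (- x * (nu v / v $ 3)) * exp (A * (nu (R0 v) / R0 v $ 3))"
        by (rule expKD[OF x0 A0'])
      also have "\<dots> \<le> exp EK * 1 * 1"
        using 1 n1 x0 A0 unfolding R0_3
        by (intro mult_mono exp_le1) (auto simp: mult_nonneg_nonneg divide_nonneg_pos)
      finally show ?thesis by simp
    qed
    have t1: "\<bar>T1\<bar> \<le> (1 - alpha) * exp EK * K"
      unfolding T1_def using e1 fA al0 al1 by (intro abs_mult_le) (auto simp: abs_mult intro!: mult_left_mono)
    have iy: "\<bar>IY\<bar> \<le> Qv v K * J" unfolding IY_def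
    proof (rule outer_bound[OF K0])
      fix w :: "real^3" assume w3: "w $ 3 < 0"
      have nw: "nu w > 0" by (rule nu_pos')
      have ee: "exp (k A w - k x v) \<le> exp EK"
      proof -
        have "exp (k A w - k x v) = exp (- (k x v - k A w))" by simp
        also have "\<dots> \<le> exp EK * exp (- x * (nu v / v $ 3)) * exp (A * (nu w / w $ 3))"
          by (rule expKD[OF x0 A0'])
        also have "\<dots> \<le> exp EK * 1 * 1"
          using 1 n1 nw w3 x0 A0
          by (intro mult_mono exp_le1) (auto simp: mult_nonneg_nonneg divide_nonneg_pos mult_nonneg_nonpos divide_pos_neg divide_nonneg_neg)
        finally show ?thesis by simp
      qed
      have "\<bar>(- w $ 3) * (sx 0 v powr (m / 2) / sx 0 w powr (m / 2)) * exp (k A w - k x v) * f A w * sqrt (Ms w)\<bar>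
         \<le> \<bar>w $ 3\<bar> * RB v w * exp EK * K * (sM * exp (- ((norm (w - ub))^2) / (4 * T)))"
        using ratio_bd[of v w] ee fA sqrtMs_le[of w] sqrtMs_pos[of w]
        by (intro abs_mult_le) auto
      also have "\<dots> = RB v w * exp EK * K * (sM * exp (- ((norm (w - ub))^2) / (4 * T))) * \<bar>w $ 3\<bar>"
        by (simp add: algebra_simps)
      also have "\<dots> \<le> Qv v K * gW w" unfolding Qv_def by (rule WB[OF K0])
      finally show "\<bar>(- w $ 3) * (sx 0 v powr (m / 2) / sx 0 w powr (m / 2)) * exp (k A w - k x v) * f A w * sqrt (Ms w)\<bar>
         \<le> Qv v K * gW w" .
    qed
    have t2: "\<bar>alpha * Mwall Tw uw v / sqrt (Ms v) * IY\<bar> \<le> alpha * Cw * K"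
      by (rule wall_final[OF K0]) (use iy in \<open>simp add: Qv_def\<close>)
    have "\<bar>YA m hb gam U delta l rho T ub Tw uw alpha A f x v\<bar> \<le> (1 - alpha) * exp EK * K + alpha * Cw * K"
      unfolding Y using t1 t2 by linarith
    also have "\<dots> \<le> exp EK * K + Cw * K"
      using al0 al1 K0 Cw_nonneg
      by (intro add_mono) (auto simp: mult_left_le_one_le mult_nonneg_nonneg mult_right_mono)
    finally show ?thesis by (simp add: algebra_simps)
  next
    case 2
    have Y: "YA m hb gam U delta l rho T ub Tw uw alpha A f x v = exp (k A v - k x v) * f A v"
      unfolding YA_def Let_def using 2 by simp
    have n1: "nu v > 0" by (rule nu_pos')
    have e1: "exp (k A v - k x v) \<le> exp EK"
    proof -
      have "exp (k A v - k x v) = exp (- (k x v - k A v))" by simp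
      also have "\<dots> \<le> exp EK * exp (- x * (nu v / v $ 3)) * exp (A * (nu v / v $ 3))"
        by (rule expKD[OF x0 A0'])
      also have "\<dots> = exp EK * exp ((A - x) * (nu v / v $ 3))"
        using 2 by (simp add: exp_add[symmetric] mult.assoc) (simp add: field_simps)
      also have "\<dots> \<le> exp EK * 1"
        using 2 n1 x0 by (intro mult_left_mono exp_le1) (auto simp: divide_nonneg_neg)
      finally show ?thesis by simp
    qed
    have "\<bar>exp (k A v - k x v) * f A v\<bar> \<le> exp EK * K" using e1 fA by (intro abs_mult_le) auto
    also have "\<dots> \<le> (exp EK + Cw) * K" using Cw_nonneg K0 by (simp add: algebra_simps)
    finally show ?thesis unfolding Y .
  next
    case 3
    then show ?thesis unfolding YA_def Let_def using K0 Cw_nonneg by simp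
  qed
qed

end


context wsetting
begin

lemma Z_bound:
  assumes K: "\<forall>x\<in>{0<..<A}. \<forall>v. \<bar>f x v / nu v\<bar> \<le> K" and x: "x \<in> {0<..<A}"
  shows "\<bar>Zop m hb gam U delta l rho T ub Tw uw alpha A f x v\<bar> \<le> (exp EK + Cw) * K"
proof -
  have K0: "K \<ge> 0" using fK[OF K x] by simp
  have x0: "0 \<le> x" "x \<le> A" using x by auto
  have AEx: "AE x' in lborel. x' \<noteq> 0 \<and> x' \<noteq> A"
    using AE_lborel_singleton[of 0] AE_lborel_singleton[of A] by eventually_elim simp
  show ?thesis
  proof (cases "v $ 3 > 0")
    case False
    then show ?thesis unfolding Zop_def Let_def using K0 Cw_nonneg by simp
  next
    case 1: True
    define Z1 where "Z1 = (\<integral>x'\<in>{0..A}. exp (- (k x v - k x' (R0 v))) * (1 / v $ 3) * f x' (R0 v) \<partial>lborel)"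
    define IZ where "IZ = (\<integral>w\<in>{w. w $ 3 < 0}. (\<integral>x'\<in>{0..A}. (- w $ 3) * (sx 0 v powr (m/2) / sx 0 w powr (m/2))
                 * exp (- (k x v - k x' w)) * (1 / w $ 3) * f x' w * sqrt (Ms w) \<partial>lborel) \<partial>lborel)"
    have Z: "Zop m hb gam U delta l rho T ub Tw uw alpha A f x v = (1 - alpha) * Z1 - alpha * Mwall Tw uw v / sqrt (Ms v) * IZ"
      unfolding Zop_def Let_def Z1_def IZ_def using 1 by simp
    have nv: "nu v > 0" "nu (R0 v) > 0" using nu_pos' by auto
    define a where "a = nu (R0 v) / v $ 3"
    have a0: "a \<ge> 0" unfolding a_def using nv 1 by simp
    have z1: "\<bar>Z1\<bar> \<le> exp EK * K"
    proof -
      have "\<bar>Z1\<bar> \<le> (LINT x':{0..A}|lborel. exp EK * K * (a * exp (- (a * (x' - 0)))))"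
        unfolding Z1_def
      proof (rule set_int_abs_bound)
        show "set_integrable lborel {0..A} (\<lambda>x'. exp EK * K * (a * exp (- (a * (x' - 0)))))"
          using int_exp_dec(1)[OF a0, of 0 A 0] A0 by auto
        from AEx show "AE x' in lborel. x' \<in> {0..A} \<longrightarrow> \<bar>exp (- (k x v - k x' (R0 v))) * (1 / v $ 3) * f x' (R0 v)\<bar>
            \<le> exp EK * K * (a * exp (- (a * (x' - 0))))"
        proof eventually_elim
          case (elim x')
          show ?case
          proof
            assume x': "x' \<in> {0..A}"
            then have x'A: "x' \<in> {0<..<A}" using elim by auto
            have "exp (- (k x v - k x' (R0 v))) \<le> exp EK * exp (- x * (nu v / v $ 3)) * exp (x' * (nu (R0 v) / R0 v $ 3))"
              using expKD[of x x'] x0 x' by auto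
            also have "\<dots> \<le> exp EK * 1 * exp (- (a * (x' - 0)))"
              unfolding R0_3 a_def using 1 nv x0
              by (intro mult_mono exp_le1) (auto simp: mult_nonneg_nonneg divide_nonneg_pos mult.commute)
            finally have e: "exp (- (k x v - k x' (R0 v))) \<le> exp EK * exp (- (a * (x' - 0)))" by simp
            have "\<bar>exp (- (k x v - k x' (R0 v))) * (1 / v $ 3) * f x' (R0 v)\<bar>
                \<le> (exp EK * exp (- (a * (x' - 0)))) * (1 / v $ 3) * (K * nu (R0 v))"
              using e fK(1)[OF K x'A] 1 by (intro prod_bound) auto
            also have "\<dots> = exp EK * K * (a * exp (- (a * (x' - 0))))"
              unfolding a_def by (simp add: algebra_simps)
            finally show "\<bar>exp (- (k x v - k x' (R0 v))) * (1 / v $ 3) * f x' (R0 v)\<bar> \<le> exp EK * K * (a * exp (- (a * (x' - 0))))" .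
          qed
        qed
      qed
      also have "\<dots> = exp EK * K * (LINT x':{0..A}|lborel. a * exp (- (a * (x' - 0))))" by simp
      also have "\<dots> \<le> exp EK * K * 1"
        using int_exp_dec(2)[OF a0, of 0 A 0] A0 K0 by (intro mult_left_mono) auto
      finally show ?thesis by simp
    qed
    have iz: "\<bar>IZ\<bar> \<le> Qv v K * J" unfolding IZ_def
    proof (rule outer_bound[OF K0])
      fix w :: "real^3" assume w3: "w $ 3 < 0"
      have nw: "nu w > 0" by (rule nu_pos')
      define b where "b = nu w / (- w $ 3)"
      have b0: "b \<ge> 0" unfolding b_def using nw w3 by (intro divide_nonneg_pos) auto
      define P where "P = RB v w * exp EK * K * (sM * exp (- ((norm (w - ub))^2) / (4 * T)))"
      have P0: "P \<ge> 0" unfolding P_def RB_def using K0 sM_pos by simp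
      have "\<bar>(\<integral>x'\<in>{0..A}. (- w $ 3) * (sx 0 v powr (m/2) / sx 0 w powr (m/2))
                 * exp (- (k x v - k x' w)) * (1 / w $ 3) * f x' w * sqrt (Ms w) \<partial>lborel)\<bar>
          \<le> (LINT x':{0..A}|lborel. (P * (- w $ 3)) * (b * exp (- (b * (x' - 0)))))"
      proof (rule set_int_abs_bound)
        show "set_integrable lborel {0..A} (\<lambda>x'. (P * (- w $ 3)) * (b * exp (- (b * (x' - 0)))))"
          by (rule set_integrable_mult_right) (use int_exp_dec(1)[OF b0, of 0 A 0] A0 in simp)
        from AEx show "AE x' in lborel. x' \<in> {0..A} \<longrightarrow> \<bar>(- w $ 3) * (sx 0 v powr (m/2) / sx 0 w powr (m/2))
                 * exp (- (k x v - k x' w)) * (1 / w $ 3) * f x' w * sqrt (Ms w)\<bar>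
            \<le> (P * (- w $ 3)) * (b * exp (- (b * (x' - 0))))"
        proof eventually_elim
          case (elim x')
          show ?case
          proof
            assume x': "x' \<in> {0..A}"
            then have x'A: "x' \<in> {0<..<A}" using elim by auto
            have "exp (- (k x v - k x' w)) \<le> exp EK * exp (- x * (nu v / v $ 3)) * exp (x' * (nu w / w $ 3))"
              using expKD[of x x'] x0 x' by auto
            also have "\<dots> \<le> exp EK * 1 * exp (- (b * (x' - 0)))"
            proof -
              have "x' * (nu w / w $ 3) = - (b * (x' - 0))" unfolding b_def using w3 by (simp add: field_simps)
              then show ?thesis using 1 nv x0
                by (intro mult_mono exp_le1) (auto simp: mult_nonneg_nonneg divide_nonneg_pos)
            qed
            finally have e: "exp (- (k x v - k x' w)) \<le> exp EK * exp (- (b * (x' - 0)))" by simp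
            have eq: "\<bar>(- w $ 3) * (sx 0 v powr (m/2) / sx 0 w powr (m/2))
                 * exp (- (k x v - k x' w)) * (1 / w $ 3) * f x' w * sqrt (Ms w)\<bar>
                = \<bar>(sx 0 v powr (m/2) / sx 0 w powr (m/2)) * exp (- (k x v - k x' w)) * f x' w * sqrt (Ms w)\<bar>"
              using w3 by (simp add: abs_mult)
            have "\<bar>(sx 0 v powr (m/2) / sx 0 w powr (m/2)) * exp (- (k x v - k x' w)) * f x' w * sqrt (Ms w)\<bar>
                \<le> RB v w * (exp EK * exp (- (b * (x' - 0)))) * (K * nu w) * (sM * exp (- ((norm (w - ub))^2) / (4 * T)))"
              using ratio_bd[of v w] e fK(1)[OF K x'A] sqrtMs_le[of w] sqrtMs_pos[of w]
              by (intro abs_mult_le) auto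
            also have "\<dots> = (P * (- w $ 3)) * (b * exp (- (b * (x' - 0))))"
              unfolding P_def b_def using w3 by (simp add: field_simps)
            finally show "\<bar>(- w $ 3) * (sx 0 v powr (m/2) / sx 0 w powr (m/2))
                 * exp (- (k x v - k x' w)) * (1 / w $ 3) * f x' w * sqrt (Ms w)\<bar>
                \<le> (P * (- w $ 3)) * (b * exp (- (b * (x' - 0))))" unfolding eq .
          qed
        qed
      qed
      also have "\<dots> = (P * (- w $ 3)) * (LINT x':{0..A}|lborel. b * exp (- (b * (x' - 0))))"
        by (rule set_integral_mult_right)
      also have "\<dots> \<le> (P * (- w $ 3)) * 1"
        using int_exp_dec(2)[OF b0, of 0 A 0] A0 P0 w3 by (intro mult_left_mono) (auto simp: mult_nonneg_nonpos)
      also have "\<dots> = P * \<bar>w $ 3\<bar>" using w3 by simp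
      also have "\<dots> \<le> Qv v K * gW w" unfolding P_def Qv_def by (rule WB[OF K0])
      finally show "\<bar>(\<integral>x'\<in>{0..A}. (- w $ 3) * (sx 0 v powr (m/2) / sx 0 w powr (m/2))
                 * exp (- (k x v - k x' w)) * (1 / w $ 3) * f x' w * sqrt (Ms w) \<partial>lborel)\<bar> \<le> Qv v K * gW w" .
    qed
    have t2: "\<bar>alpha * Mwall Tw uw v / sqrt (Ms v) * IZ\<bar> \<le> alpha * Cw * K"
      by (rule wall_final[OF K0]) (use iz in \<open>simp add: Qv_def\<close>)
    have t1: "\<bar>(1 - alpha) * Z1\<bar> \<le> (1 - alpha) * (exp EK * K)"
      using z1 al1 by (simp add: abs_mult mult_left_mono)
    have "\<bar>Zop m hb gam U delta l rho T ub Tw uw alpha A f x v\<bar> \<le> (1 - alpha) * (exp EK * K) + alpha * Cw * K"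
      unfolding Z using t1 t2 by linarith
    also have "\<dots> \<le> exp EK * K + Cw * K"
      using al0 al1 K0 Cw_nonneg
      by (intro add_mono) (auto simp: mult_left_le_one_le mult_nonneg_nonneg mult_right_mono)
    finally show ?thesis by (simp add: algebra_simps)
  qed
qed

end


theorem lemma2p2:
  fixes gam m beta theta rho T Tw alpha :: real
    and ub uw :: "real^3"
    and Ups :: "real \<Rightarrow> real"
  assumes "rho > 0" and "T > 0" and "ub $ 3 = 0"
    and "0 < Tw" and "Tw < 2 * T" and "uw $ 3 = 0"
    and "0 \<le> alpha" and "alpha \<le> 1"
    and "cutoff Ups"
    and "-3 < gam" and "gam \<le> 1" and "theta > 0"
  shows "\<exists>C>0. \<forall>l\<ge>1. \<forall>A>0. \<exists>h0>0. \<exists>d0>0. \<forall>hb delta. 0 < hb \<and> hb < h0 \<and> 0 < delta \<and> delta < d0 \<longrightarrow>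
    (\<forall>f :: real \<Rightarrow> real^3 \<Rightarrow> real. (\<lambda>(x, v). f x v) \<in> borel_measurable borel \<longrightarrow>
      (\<forall>K. (\<forall>v. \<bar>f A v\<bar> \<le> K) \<longrightarrow>
         (\<forall>x\<in>{0<..<A}. \<forall>v. v $ 3 \<noteq> 0 \<longrightarrow>
            \<bar>YA m hb gam Ups delta l rho T ub Tw uw alpha A f x v\<bar> \<le> C * K)) \<and>
      (\<forall>K. (\<forall>x\<in>{0<..<A}. \<forall>v. \<bar>f x v / nuf gam rho T ub v\<bar> \<le> K) \<longrightarrow>
         (\<forall>x\<in>{0<..<A}. \<forall>v. v $ 3 \<noteq> 0 \<longrightarrow>
            \<bar>Zop m hb gam Ups delta l rho T ub Tw uw alpha A f x v\<bar> \<le> C * K)) \<and>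
      (\<forall>K. (\<forall>x\<in>{0<..<A}. \<forall>v. \<bar>f x v / nuf gam rho T ub v\<bar> \<le> K) \<longrightarrow>
         (\<forall>x\<in>{0<..<A}. \<forall>v. v $ 3 \<noteq> 0 \<longrightarrow>
            \<bar>Uop m hb gam Ups delta l rho T ub A f x v\<bar> \<le> C * K)))"
proof -
  note rho = assms(1) and T = assms(2) and ub3 = assms(3) and Tw0 = assms(4) and Tw2 = assms(5)
    and al0 = assms(7) and al1 = assms(8) and U = assms(9) and g1 = assms(10) and g2 = assms(11)
  obtain B where B0: "B \<ge> 0" and Bb: "\<And>s. s > 0 \<Longrightarrow> \<bar>deriv Ups s\<bar> \<le> B"
    using ups_d1_bound[OF U] by blast
  interpret CU: cut Ups gam B using U g1 g2 B0 Bb by unfold_locales auto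
  define c2 where "c2 = 7 + 20 * B"
  have c2: "CU.c2 = c2" unfolding CU.c2_def c2_def ..
  define EK where "EK = \<bar>m\<bar> * ln (2 * c2) + 2"
  define M0 where "M0 = rho / (2 * pi * T) powr (3/2)"
  define sM where "sM = sqrt M0"
  define cW where "cW = sqrt (2 * pi / Tw) * (2 * pi * Tw) powr (-3/2)"
  define aa where "aa = 1 / (2 * Tw) - 1 / (4 * T)"
  define bb where "bb = 2 * \<bar>m\<bar> + norm (ub - uw) / Tw"
  define gW where "gW w = exp ((2 * \<bar>m\<bar> + 1) * norm (w - ub) - (1 / (4 * T)) * (norm (w - ub))^2)" for w
  define J where "J = integral\<^sup>L lborel gW"
  define Cw where "Cw = cW / sM * exp (1 + bb^2 / (2 * aa)) * exp (\<bar>m\<bar> / 2 * ln c2) * exp EK * sM * J"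
  define C where "C = exp EK + Cw"
  have aa0: "aa > 0" unfolding aa_def using Tw0 Tw2 T by (simp add: field_simps)
  have J0: "J \<ge> 0" unfolding J_def gW_def by simp
  have sM0: "sM > 0" unfolding sM_def M0_def using rho T by simp
  have Cw0: "Cw \<ge> 0" unfolding Cw_def cW_def using sM0 J0 Tw0 by simp
  have C0: "C > 0" unfolding C_def using Cw0 by (simp add: add_pos_nonneg)
  show ?thesis
  proof (rule exI[of _ C], rule conjI[OF C0], intro allI impI)
    fix l A :: real assume l1: "l \<ge> 1" and A0: "A > 0"
    define h0 where "h0 = min 1 (min (1 / (6 * l)) (aa / 6))"
    define d0 where "d0 = 1 / (c2 * A)"
    have c2p: "c2 > 0" unfolding c2_def using B0 by simp
    show "\<exists>h0>0. \<exists>d0>0. \<forall>hb delta. 0 < hb \<and> hb < h0 \<and> 0 < delta \<and> delta < d0 \<longrightarrow>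
    (\<forall>f :: real \<Rightarrow> real^3 \<Rightarrow> real. (\<lambda>(x, v). f x v) \<in> borel_measurable borel \<longrightarrow>
      (\<forall>K. (\<forall>v. \<bar>f A v\<bar> \<le> K) \<longrightarrow>
         (\<forall>x\<in>{0<..<A}. \<forall>v. v $ 3 \<noteq> 0 \<longrightarrow>
            \<bar>YA m hb gam Ups delta l rho T ub Tw uw alpha A f x v\<bar> \<le> C * K)) \<and>
      (\<forall>K. (\<forall>x\<in>{0<..<A}. \<forall>v. \<bar>f x v / nuf gam rho T ub v\<bar> \<le> K) \<longrightarrow>
         (\<forall>x\<in>{0<..<A}. \<forall>v. v $ 3 \<noteq> 0 \<longrightarrow>
            \<bar>Zop m hb gam Ups delta l rho T ub Tw uw alpha A f x v\<bar> \<le> C * K)) \<and>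
      (\<forall>K. (\<forall>x\<in>{0<..<A}. \<forall>v. \<bar>f x v / nuf gam rho T ub v\<bar> \<le> K) \<longrightarrow>
         (\<forall>x\<in>{0<..<A}. \<forall>v. v $ 3 \<noteq> 0 \<longrightarrow>
            \<bar>Uop m hb gam Ups delta l rho T ub A f x v\<bar> \<le> C * K)))"
    proof (rule exI[of _ h0], rule conjI, goal_cases)
      case 1 show "h0 > 0" unfolding h0_def using l1 aa0 by simp
    next
      case 2
      show ?case
      proof (rule exI[of _ d0], rule conjI, goal_cases)
      case 1 show "d0 > 0" unfolding d0_def using c2p A0 by simp
    next
      case 2
      show ?case
      proof (intro allI impI, intro conjI)
      fix hb delta :: real and f :: "real \<Rightarrow> real^3 \<Rightarrow> real"
      assume hd: "0 < hb \<and> hb < h0 \<and> 0 < delta \<and> delta < d0"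
      have dA: "delta * A * CU.c2 \<le> 1"
      proof -
        have "delta * (c2 * A) \<le> d0 * (c2 * A)" using hd c2p A0 by (intro mult_right_mono) auto
        also have "\<dots> = 1" unfolding d0_def using c2p A0 by simp
        finally show ?thesis unfolding c2 by (simp add: algebra_simps)
      qed
      interpret W: wsetting Ups gam B m hb delta l A rho T ub Tw alpha uw
        using hd dA A0 l1 rho T ub3 Tw0 Tw2 al0 al1
        by unfold_locales (auto simp: h0_def aa_def)
      have EKe: "W.EK = EK" unfolding W.EK_def EK_def c2 ..
      have Cwe: "W.Cw = Cw"
        unfolding W.Cw_def Cw_def W.cW_def cW_def W.sM_def sM_def W.M0_def M0_def W.bb_def bb_def
          W.aa_def aa_def W.J_def J_def W.gW_def[abs_def] gW_def[abs_def] EKe c2 ..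
      have Ce: "exp W.EK + W.Cw = C" unfolding C_def EKe Cwe ..
      assume "(\<lambda>(x, v). f x v) \<in> borel_measurable borel"
      show "\<forall>K. (\<forall>v. \<bar>f A v\<bar> \<le> K) \<longrightarrow>
         (\<forall>x\<in>{0<..<A}. \<forall>v. v $ 3 \<noteq> 0 \<longrightarrow>
            \<bar>YA m hb gam Ups delta l rho T ub Tw uw alpha A f x v\<bar> \<le> C * K)"
        using W.Y_bound unfolding Ce by blast
      show "\<forall>K. (\<forall>x\<in>{0<..<A}. \<forall>v. \<bar>f x v / nuf gam rho T ub v\<bar> \<le> K) \<longrightarrow>
         (\<forall>x\<in>{0<..<A}. \<forall>v. v $ 3 \<noteq> 0 \<longrightarrow>
            \<bar>Zop m hb gam Ups delta l rho T ub Tw uw alpha A f x v\<bar> \<le> C * K)"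
        using W.Z_bound unfolding Ce by blast
      show "\<forall>K. (\<forall>x\<in>{0<..<A}. \<forall>v. \<bar>f x v / nuf gam rho T ub v\<bar> \<le> K) \<longrightarrow>
         (\<forall>x\<in>{0<..<A}. \<forall>v. v $ 3 \<noteq> 0 \<longrightarrow>
            \<bar>Uop m hb gam Ups delta l rho T ub A f x v\<bar> \<le> C * K)"
      proof (intro allI impI ballI)
        fix K x v
        assume K: "\<forall>x\<in>{0<..<A}. \<forall>v. \<bar>f x v / nuf gam rho T ub v\<bar> \<le> K" and x: "x \<in> {0<..<A}"
        have K0: "K \<ge> 0" using W.fK[OF K x] by simp
        have "\<bar>Uop m hb gam Ups delta l rho T ub A f x v\<bar> \<le> exp W.EK * K" by (rule W.U_bound[OF K x])
        also have "\<dots> \<le> (exp W.EK + W.Cw) * K" using W.Cw_nonneg K0 by (simp add: algebra_simps)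
        finally show "\<bar>Uop m hb gam Ups delta l rho T ub A f x v\<bar> \<le> C * K" unfolding Ce .
      qed
    qed
    qed
    qed
  qed
qed


end
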